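(* Let $k$ be a finite field. Let $\mathcal S$ be a finite set of irreducible polynomials in $k[T]$, let $J, M$ be natural numbers, and for each $j\in\{1,\ldots,J\}$ let $f_j(X_1,\ldots,X_M)\in k[T][X_1,\ldots,X_M]$. Assume that there exists a sequence $\{(e_{1,n},\ldots,e_{M,n})\}_{n\ge1}$ in $\mathbb Z^M$ such that for every $Q(T)\in k[T]$ not divisible by any element of $\mathcal S$, there is $N_Q\in\mathbb N$ such that for every $n\ge N_Q$, $Q(T)$ divides $f_j(T^{e_{1,n}},\ldots,T^{e_{M,n}})$ for all $j\in\{1,\ldots,J\}$. Then there exists a sequence $\{(e'_{1,n},\ldots,e'_{M,n})\}_{n\in\mathcal N}$ in $\mathbb Z^M$ indexed by an infinite subset $\mathcal N\subset\mathbb N$ such that: (1) for each $n\in\mathcal N$, $f_j(T^{e'_{1,n}},\ldots,T^{e'_{M,n}})=0$ for all $j\in\{1,\ldots,J\}$; (2) for every $\widetilde Q(T)\in k[T]$ not divisible by $T$, there is $\widetilde N_{\widetilde Q}\in\mathbb N$ such that for every $n\in\mathcal N$ with $n\ge\widetilde N_{\widetilde Q}$, $\widetilde Q(T)$ divides $T^{e_{i,n}}-T^{e'_{i,n}}$ for all $i\in\{1,\ldots,M\}$.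
   Context: Convention on divisibility: for a polynomial $Q(T)\in k[T]$ and a rational function $P(T)\in k(T)$, one says that $Q(T)$ divides $P(T)$ if no zero of $Q(T)$ in an algebraic closure $k^{\mathrm{alg}}$ of $k$ is a pole of $P(T)/Q(T)$. (Divisibility of $Q$ by an element of $\mathcal S$, or of $\widetilde Q$ by $T$, is ordinary divisibility in $k[T]$.) Note $f_j(T^{e_{1,n}},\ldots,T^{e_{M,n}})\in k[T,T^{-1}]\subset k(T)$ since exponents may be negative. *)

theory Defs
  imports "HOL-Computational_Algebra.Computational_Algebra" "HOL-Computational_Algebra.Fraction_Field"
begin

type_synonym 'a ratfun = "'a poly fract"

definition rf_of_poly :: "'a::field poly \<Rightarrow> 'a ratfun" where
  "rf_of_poly p = Fract p 1"

definition Tpow :: "int \<Rightarrow> 'a::field ratfun" where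
  "Tpow e = rf_of_poly [:0, 1:] powi e"

text \<open>A multivariate polynomial f in k[T][X_0,...,X_(M-1)] is given by its coefficient
  function c on exponent vectors (nat \<Rightarrow> nat): finitely many nonzero coefficients, and
  only the variables X_0..X_(M-1) occur.\<close>
definition is_mpoly :: "nat \<Rightarrow> ((nat \<Rightarrow> nat) \<Rightarrow> 'a::field poly) \<Rightarrow> bool" where
  "is_mpoly M c \<longleftrightarrow> finite {\<alpha>. c \<alpha> \<noteq> 0} \<and> (\<forall>\<alpha>. c \<alpha> \<noteq> 0 \<longrightarrow> (\<forall>i\<ge>M. \<alpha> i = 0))"

definition eval_Tpow :: "nat \<Rightarrow> ((nat \<Rightarrow> nat) \<Rightarrow> 'a::field poly) \<Rightarrow> (nat \<Rightarrow> int) \<Rightarrow> 'a ratfun" where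
  "eval_Tpow M c e = (\<Sum>\<alpha>\<in>{\<alpha>. c \<alpha> \<noteq> 0}. rf_of_poly (c \<alpha>) * (\<Prod>i<M. Tpow (e i) ^ \<alpha> i))"

text \<open>Q divides the rational function P: no zero of Q (in an algebraic closure) is a pole
  of P/Q. Equivalently: P = A/B with Q dividing A and B coprime to Q (i.e. B has no common
  zero with Q).\<close>
definition rf_dvd :: "'a::field poly \<Rightarrow> 'a ratfun \<Rightarrow> bool" where
  "rf_dvd Q P \<longleftrightarrow> (\<exists>A B. B \<noteq> 0 \<and> coprime B Q \<and> Q dvd A \<and> P = Fract A B)"

end

theory Submission
  imports Defs "Jordan_Normal_Form.Matrix"
begin



lemma rf_add: "rf_of_poly (p + q) = rf_of_poly p + rf_of_poly (q::'a::field poly)"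
  by (simp add: rf_of_poly_def)
lemma rf_mult: "rf_of_poly (p * q) = rf_of_poly p * rf_of_poly (q::'a::field poly)"
  by (simp add: rf_of_poly_def)
lemma rf_diff: "rf_of_poly (p - q) = rf_of_poly p - rf_of_poly (q::'a::field poly)"
  by (simp add: rf_of_poly_def)
lemma rf_zero: "rf_of_poly (0::'a::field poly) = 0"
  by (simp add: rf_of_poly_def Zero_fract_def)
lemma rf_one: "rf_of_poly (1::'a::field poly) = 1"
  by (simp add: rf_of_poly_def One_fract_def)
lemma rf_eq_iff: "rf_of_poly p = rf_of_poly (q::'a::field poly) \<longleftrightarrow> p = q"
  by (simp add: rf_of_poly_def eq_fract)
lemma rf_eq_0_iff: "rf_of_poly p = 0 \<longleftrightarrow> p = (0::'a::field poly)"
  using rf_eq_iff[of p 0] by (simp add: rf_zero)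
lemma rf_sum: "rf_of_poly (\<Sum>k\<in>K. p k) = (\<Sum>k\<in>K. rf_of_poly (p k :: 'a::field poly))"
  by (induction K rule: infinite_finite_induct) (auto simp: rf_zero rf_add)
lemma rf_pow: "rf_of_poly (p ^ n) = rf_of_poly (p::'a::field poly) ^ n"
  by (induction n) (auto simp: rf_one rf_mult)

lemma rfX_nz: "rf_of_poly [:0, 1::'a::field:] \<noteq> 0"
  by (simp add: rf_eq_0_iff)

lemma Tpow_add: "Tpow (a + b) = (Tpow a * Tpow b :: 'a::field ratfun)"
  unfolding Tpow_def by (rule power_int_add) (simp add: rfX_nz)

lemma Tpow_nat: "Tpow (int n) = (rf_of_poly ([:0, 1:] ^ n) :: 'a::field ratfun)"
  unfolding Tpow_def by (simp add: rf_pow)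

lemma Tpow_pow: "Tpow a ^ n = (Tpow (int n * a) :: 'a::field ratfun)"
  unfolding Tpow_def by (simp add: power_int_power' mult.commute)

lemma Tpow_zero: "Tpow 0 = (1 :: 'a::field ratfun)"
  unfolding Tpow_def by simp

definition lin :: "nat \<Rightarrow> (nat \<Rightarrow> nat) \<Rightarrow> (nat \<Rightarrow> int) \<Rightarrow> int" where
  "lin M \<alpha> x = (\<Sum>i<M. int (\<alpha> i) * x i)"

lemma prod_Tpow: "(\<Prod>i<M. Tpow (x i) ^ \<alpha> i) = (Tpow (lin M \<alpha> x) :: 'a::field ratfun)"
  unfolding lin_def
  by (induction M) (auto simp: Tpow_zero Tpow_pow Tpow_add mult.commute)

lemma eval_alt: "eval_Tpow M c x = (\<Sum>\<alpha>\<in>{\<alpha>. c \<alpha> \<noteq> 0}. rf_of_poly (c \<alpha>) * Tpow (lin M \<alpha> x))"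
  unfolding eval_Tpow_def by (simp add: prod_Tpow)

lemma Tpow_shift: assumes "a + int t \<ge> 0"
  shows "Tpow a * rf_of_poly ([:0,1:] ^ t) = (rf_of_poly ([:0,1::'a::field:] ^ nat (a + int t)))"
proof -
  have "Tpow a * rf_of_poly ([:0,1:] ^ t) = (Tpow a * Tpow (int t) :: 'a ratfun)" by (simp add: Tpow_nat)
  also have "\<dots> = Tpow (a + int t)" by (simp add: Tpow_add)
  also have "\<dots> = Tpow (int (nat (a + int t)))" using assms by (metis int_nat_eq)
  also have "\<dots> = rf_of_poly ([:0,1::'a:] ^ nat (a + int t))" by (rule Tpow_nat)
  finally show ?thesis .
qed

lemma sum_shift: assumes "\<forall>k\<in>K. g k + int t \<ge> 0"
  shows "(\<Sum>k\<in>K. rf_of_poly (c k) * Tpow (g k)) * rf_of_poly ([:0,1:] ^ t)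
       = rf_of_poly (\<Sum>k\<in>K. c k * [:0,1::'a::field:] ^ nat (g k + int t))"
proof -
  have "(\<Sum>k\<in>K. rf_of_poly (c k) * Tpow (g k)) * rf_of_poly ([:0,1:] ^ t)
      = (\<Sum>k\<in>K. rf_of_poly (c k) * (Tpow (g k) * rf_of_poly ([:0,1::'a:] ^ t)))"
    by (simp add: sum_distrib_right mult.assoc)
  also have "\<dots> = (\<Sum>k\<in>K. rf_of_poly (c k * [:0,1::'a:] ^ nat (g k + int t)))"
  proof (intro sum.cong refl)
    fix k assume "k \<in> K"
    thus "rf_of_poly (c k) * (Tpow (g k) * rf_of_poly ([:0, 1:] ^ t)) =
         rf_of_poly (c k * [:0, 1::'a:] ^ nat (g k + int t))"
    proof -
      have h: "Tpow (g k) * rf_of_poly ([:0, 1:] ^ t) = rf_of_poly ([:0, 1::'a:] ^ nat (g k + int t))"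
        using assms Tpow_shift[of "g k" t] \<open>k \<in> K\<close> by blast
      show ?thesis by (simp only: rf_mult h)
    qed
  qed
  finally show ?thesis by (simp add: rf_sum)
qed

lemma rf_dvd_intro: assumes "B \<noteq> 0" "coprime B Q" "Q dvd A" "P * rf_of_poly B = rf_of_poly A"
  shows "rf_dvd Q (P :: 'a::field ratfun)"
proof -
  have "P = rf_of_poly A * inverse (rf_of_poly B)"
    using assms(1,4) by (metis nonzero_mult_div_cancel_right divide_inverse rf_eq_0_iff)
  also have "\<dots> = Fract A B" by (simp add: rf_of_poly_def)
  finally show ?thesis unfolding rf_dvd_def using assms by blast
qed



lemma one_dvd_pow_minus: "(x - 1) dvd (x ^ n - (1::'a::comm_ring_1))"
proof (induction n)
  case (Suc n)
  have "x ^ Suc n - 1 = x * (x ^ n - 1) + (x - 1)" by (simp add: algebra_simps)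
  thus ?case using Suc by (metis dvd_add dvd_mult dvd_refl)
qed simp

lemma pow_minus_dvd_mult: "(x ^ d - 1) dvd (x ^ (d * q) - (1::'a::comm_ring_1))"
  using one_dvd_pow_minus[of "x ^ d" q] by (simp add: power_mult)

lemma poly_bezout_gen: "\<exists>g u v. g dvd a \<and> g dvd b \<and> u * a + v * b = (g :: 'a::field poly)"
proof (induction b arbitrary: a rule: measure_induct_rule[of euclidean_size])
  case (less b a)
  show ?case
  proof (cases "b = 0")
    case True
    thus ?thesis by (rule_tac x=a in exI, rule_tac x=1 in exI, rule_tac x=0 in exI) simp
  next
    case False
    hence "euclidean_size (a mod b) < euclidean_size b" by (rule mod_size_less)
    then obtain g u v where g: "g dvd b" "g dvd a mod b" "u * b + v * (a mod b) = g"
      using less by blast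
    have am: "a mod b = a - (a div b) * b" by (simp add: minus_div_mult_eq_mod)
    have "g dvd a"
      using g(1,2) am by (metis dvd_add dvd_mult div_mult_mod_eq)
    moreover have "v * a + (u - v * (a div b)) * b = g"
      using g(3) am by (simp add: algebra_simps)
    ultimately show ?thesis using g(1) by blast
  qed
qed

lemma coprime_bezout: assumes "coprime a (b :: 'a::field poly)"
  shows "\<exists>u v. u * a + v * b = 1"
proof -
  obtain g u v where g: "g dvd a" "g dvd b" "u * a + v * b = g" using poly_bezout_gen by blast
  have "is_unit g" using assms g by (meson coprime_common_divisor)
  then obtain h where h: "1 = g * h" by (auto elim: dvdE)
  have "(h * u) * a + (h * v) * b = h * (u * a + v * b)" by (simp add: algebra_simps)
  also have "\<dots> = 1" using g(3) h by (simp add: mult.commute)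
  finally have "(h * u) * a + (h * v) * b = 1" .
  thus ?thesis by blast
qed

lemma bezout_coprime: assumes "u * a + v * b = (1 :: 'a::field poly)" shows "coprime a b"
proof (rule coprimeI)
  fix c assume "c dvd a" "c dvd b"
  hence "c dvd u * a + v * b" by simp
  thus "is_unit c" using assms by simp
qed

lemma coprime_mult_left_poly: assumes "coprime a (Q :: 'a::field poly)" "coprime b Q"
  shows "coprime (a * b) Q"
proof -
  obtain u1 v1 where 1: "u1 * a + v1 * Q = 1" using coprime_bezout assms(1) by blast
  obtain u2 v2 where 2: "u2 * b + v2 * Q = 1" using coprime_bezout assms(2) by blast
  have "(u1 * a + v1 * Q) * (u2 * b + v2 * Q) = 1" using 1 2 by simp
  hence "(u1 * u2) * (a * b) + (u1 * a * v2 + v1 * (u2 * b + v2 * Q)) * Q = 1"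
    by (simp add: algebra_simps)
  thus ?thesis by (rule bezout_coprime)
qed

lemma coprime_power_left_poly: assumes "coprime a (Q :: 'a::field poly)"
  shows "coprime (a ^ n) Q"
  by (induction n) (auto intro: coprime_mult_left_poly assms)

lemma coprime_dvd_poly: assumes "coprime B (Q :: 'a::field poly)" "Q dvd R * B"
  shows "Q dvd R"
proof -
  obtain u v where uv: "u * B + v * Q = 1" using coprime_bezout assms(1) by blast
  have "R = R * (u * B + v * Q)" using uv by simp
  also have "\<dots> = u * (R * B) + (v * R) * Q" by (simp add: algebra_simps)
  finally have "R = u * (R * B) + (v * R) * Q" .
  moreover have "Q dvd u * (R * B) + (v * R) * Q" using assms(2) by simp
  ultimately show ?thesis by metis
qed

lemma X_coprime: assumes "\<not> [:0, 1:] dvd (Q :: 'a::field poly)"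
  shows "coprime [:0, 1:] Q"
proof (rule coprimeI)
  fix c assume c: "c dvd [:0, 1:]" "c dvd Q"
  then obtain k where k: "[:0, 1:] = c * k" by (auto elim: dvdE)
  have cnz: "c \<noteq> 0" "k \<noteq> 0" using k by auto
  have d1: "degree ([:0,1::'a:]) = 1" by simp
  have "degree c + degree k = 1" using d1 k cnz degree_mult_eq[of c k] by metis
  show "is_unit c"
  proof (cases "degree c = 0")
    case True thus ?thesis using cnz is_unit_iff_degree by blast
  next
    case False
    hence "degree k = 0" using \<open>degree c + degree k = 1\<close> by simp
    hence "is_unit k" using cnz is_unit_iff_degree by blast
    hence "[:0, 1:] dvd c" using k by (metis dvd_mult_unit_iff dvd_refl)
    hence "[:0, 1:] dvd Q" using c(2) by (rule dvd_trans)
    thus ?thesis using assms by simp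
  qed
qed

lemma irreducible_X_cases: assumes "irreducible (p :: 'a::field poly)"
  shows "coprime p [:0, 1:] \<or> p dvd [:0, 1:]"
proof (cases "p dvd [:0, 1:]")
  case False
  have "coprime p [:0, 1:]"
  proof (rule coprimeI)
    fix c assume c: "c dvd p" "c dvd [:0, 1:]"
    from irreducibleD'[OF assms c(1)] have "p dvd c \<or> is_unit c" .
    thus "is_unit c" using c(2) False dvd_trans by blast
  qed
  thus ?thesis by simp
qed simp

lemma finite_deg_le: "finite {p :: 'a::{zero,finite} poly. degree p \<le> n}"
proof -
  have "{p :: 'a poly. degree p \<le> n} \<subseteq> Poly ` {xs. set xs \<subseteq> UNIV \<and> length xs \<le> Suc n}"
  proof
    fix p :: "'a poly" assume "p \<in> {p. degree p \<le> n}"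
    hence d: "degree p \<le> n" by simp
    have "Poly (map (coeff p) [0..<Suc n]) = p"
    proof (rule poly_eqI)
      fix i show "coeff (Poly (map (coeff p) [0..<Suc n])) i = coeff p i"
        using d by (auto simp del: upt_Suc simp: nth_default_def coeff_eq_0 nth_map_upt)
    qed
    moreover have "map (coeff p) [0..<Suc n] \<in> {xs. set xs \<subseteq> UNIV \<and> length xs \<le> Suc n}" by simp
    ultimately show "p \<in> Poly ` {xs. set xs \<subseteq> UNIV \<and> length xs \<le> Suc n}"
      by (metis image_eqI)
  qed
  thus ?thesis by (rule finite_subset) (intro finite_imageI finite_lists_length_le finite_UNIV)
qed

lemma order_exists: assumes "Q \<noteq> 0" "coprime [:0, 1:] (Q :: 'a::{field,finite} poly)"
  shows "\<exists>d>0. Q dvd [:0, 1:] ^ d - 1"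
proof -
  let ?f = "\<lambda>i::nat. [:0, 1:] ^ i mod Q"
  have "range ?f \<subseteq> {p. degree p \<le> degree Q}"
  proof
    fix x assume "x \<in> range ?f"
    then obtain i where x: "x = [:0, 1:] ^ i mod Q" by blast
    show "x \<in> {p. degree p \<le> degree Q}"
      using assms(1) degree_mod_less'[of Q "[:0, 1:] ^ i"] x by (cases "x = 0") auto
  qed
  hence "finite (range ?f)" using finite_deg_le finite_subset by blast
  hence "\<not> inj ?f" using finite_imageD infinite_UNIV_nat by blast
  then obtain i j where ij: "i \<noteq> j" "?f i = ?f j" unfolding inj_def by blast
  have "\<exists>i j. i < j \<and> ?f i = ?f j"
    using ij by (metis linorder_neqE_nat)
  then obtain i j where ij: "i < j" "?f i = ?f j" by blast
  hence "Q dvd [:0, 1:] ^ j - [:0, 1:] ^ i" using mod_eq_dvd_iff[of "[:0, 1::'a:] ^ j" Q "[:0, 1:] ^ i"] by simp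
  moreover have "[:0, 1:] ^ j - [:0, 1:] ^ i = ([:0, 1:] ^ (j - i) - 1) * [:0, 1::'a:] ^ i"
    using ij(1) by (simp add: algebra_simps power_add[symmetric])
  ultimately have "Q dvd ([:0, 1:] ^ (j - i) - 1) * [:0, 1::'a:] ^ i" by simp
  moreover have "coprime ([:0, 1::'a:] ^ i) Q" using coprime_power_left_poly assms(2) by blast
  ultimately have "Q dvd [:0, 1:] ^ (j - i) - 1" using coprime_dvd_poly by blast
  thus ?thesis using ij(1) by (intro exI[of _ "j - i"]) simp
qed

lemma dvd_X_pow_diff: assumes "Q dvd [:0, 1:] ^ d - 1" "d > 0" "int d dvd (a - b)" "a \<ge> 0" "b \<ge> 0"
  shows "Q dvd [:0, 1::'a::field:] ^ nat a - [:0, 1:] ^ nat b"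
proof -
  { fix a b :: int assume ab: "b \<le> a" "int d dvd (a - b)" "b \<ge> 0"
    obtain q where q: "a - b = int d * q" using ab by (auto elim: dvdE)
    have "0 \<le> int d * q" using q ab by simp
    hence q0: "q \<ge> 0" using zero_le_mult_iff[of "int d" q] assms(2) by simp
    have "nat a = nat (b + int d * q)" using q by (simp add: algebra_simps)
    also have "\<dots> = nat b + nat (int d * q)" using ab q0 by (simp add: nat_add_distrib)
    also have "\<dots> = nat b + d * nat q" using q0 by (simp add: nat_mult_distrib)
    finally have na: "nat a = nat b + d * nat q" .
    hence "[:0, 1::'a:] ^ nat a - [:0, 1:] ^ nat b = [:0, 1:] ^ nat b * ([:0,1:] ^ (d * nat q) - 1)"
      by (simp add: power_add algebra_simps)
    moreover have "Q dvd [:0,1::'a:] ^ (d * nat q) - 1"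
      using assms(1) pow_minus_dvd_mult dvd_trans by blast
    ultimately have "Q dvd [:0, 1::'a:] ^ nat a - [:0, 1:] ^ nat b" by simp }
  note * = this
  show ?thesis
  proof (cases "b \<le> a")
    case True thus ?thesis using * assms by blast
  next
    case False
    have "int d dvd (b - a)" using assms(3) by (metis dvd_minus_iff minus_diff_eq)
    hence "Q dvd [:0, 1::'a:] ^ nat b - [:0, 1:] ^ nat a" using *[of a b] False assms by simp
    hence "Q dvd - ([:0, 1::'a:] ^ nat a - [:0, 1:] ^ nat b)" by simp
    thus ?thesis by (simp only: dvd_minus_iff)
  qed
qed

lemma rf_dvd_imp: assumes "rf_dvd Q P" "P * rf_of_poly B0 = rf_of_poly R"
  shows "Q dvd (R :: 'a::field poly)"
proof -
  obtain A B where AB: "B \<noteq> 0" "coprime B Q" "Q dvd A" "P = Fract A B"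
    using assms(1) unfolding rf_dvd_def by blast
  have "Fract (A * B0) B = Fract R 1" using assms(2) AB(4) by (simp add: rf_of_poly_def)
  hence "A * B0 = R * B" using AB(1) by (simp add: eq_fract)
  hence "Q dvd R * B" using AB(3) by (metis dvd_mult2)
  thus ?thesis using AB(2) coprime_dvd_poly by blast
qed



lemma degree_X_pow: "degree ([:0, 1::'a::field:] ^ n) = n"
  by (simp add: degree_power_eq)

lemma degree_X_pow_minus_1: assumes "W > 0" shows "degree ([:0, 1::'a::field:] ^ W - 1) = W"
proof -
  have "coeff ([:0, 1::'a:] ^ W - 1) W = 1" using assms by (simp add: coeff_linear_power)
  hence "W \<le> degree ([:0, 1::'a:] ^ W - 1)" by (intro le_degree) simp
  moreover have "degree ([:0, 1::'a:] ^ W - 1) \<le> W"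
    using degree_diff_le[of "[:0, 1::'a:] ^ W" W 1] by (simp add: degree_X_pow)
  ultimately show ?thesis by simp
qed

lemma deg_sum_less: assumes "finite K" "W > 0" "\<forall>k\<in>K. degree (p k) < W"
  shows "degree (\<Sum>k\<in>K. p k :: 'a::field poly) < W"
  using assms
proof (induction K rule: finite_induct)
  case (insert x F)
  thus ?case using degree_add_le_max[of "p x" "sum p F"] by auto
qed simp

lemma mod_inj: assumes "W > (0::nat)" shows "inj_on (\<lambda>u. (b + u) mod W) {..<W}"
proof (rule inj_onI)
  fix u u' assume uu: "u \<in> {..<W}" "u' \<in> {..<W}" "(b + u) mod W = (b + u') mod W"
  { fix u u' assume uu: "u < W" "u' < W" "(b + u) mod W = (b + u') mod W" "u \<le> u'"
    have "W dvd (b + u') - (b + u)" using uu mod_eq_dvd_iff_nat[of "b + u" "b + u'" W] by simp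
    hence "W dvd u' - u" by simp
    moreover have "u' - u < W" using uu by simp
    ultimately have "u' - u = 0" using nat_dvd_not_less by (metis gr0I)
    hence "u = u'" using uu by simp }
  thus "u = u'" using uu by (metis lessThan_iff nat_le_linear)
qed

lemma rotate:
  fixes c :: "'k \<Rightarrow> 'a::field poly" and b :: "'k \<Rightarrow> nat"
  assumes K: "finite K" and H: "H \<noteq> 0" and W: "W > 0" and deg: "\<forall>k\<in>K. degree (c k) < D"
    and card: "card K * (D + degree H) < W"
    and dv: "([:0, 1:] ^ W - 1) dvd (\<Sum>k\<in>K. c k * [:0, 1:] ^ (b k)) * H"
  shows "\<exists>u. (\<Sum>k\<in>K. c k * [:0, 1:] ^ ((b k + u) mod W)) = 0"
proof -
  define bad where "bad k = {u \<in> {..<W}. W < (b k + u) mod W + D + degree H}" for k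
  define V where "V = {v. v < W \<and> W < v + D + degree H}"
  have cardbad: "card (bad k) \<le> D + degree H" for k
  proof -
    have i1: "(\<lambda>u. (b k + u) mod W) ` bad k \<subseteq> V" unfolding bad_def V_def using W by auto
    have i2: "V \<subseteq> {W - (D + degree H) ..< W}" unfolding V_def by auto
    have "card ((\<lambda>u. (b k + u) mod W) ` bad k) \<le> D + degree H"
    proof -
      have "card ((\<lambda>u. (b k + u) mod W) ` bad k) \<le> card {W - (D + degree H) ..< W}"
        by (rule card_mono[OF finite_atLeastLessThan]) (use i1 i2 in blast)
      thus ?thesis by simp
    qed
    moreover have "inj_on (\<lambda>u. (b k + u) mod W) (bad k)"
      using mod_inj[OF W, of "b k"] unfolding bad_def by (rule inj_on_subset) auto
    ultimately show ?thesis by (simp add: card_image)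
  qed
  have "card (\<Union>k\<in>K. bad k) \<le> (\<Sum>k\<in>K. card (bad k))" by (rule card_UN_le[OF K])
  also have "\<dots> \<le> card K * (D + degree H)" using sum_bounded_above[of K "\<lambda>k. card (bad k)"] cardbad by simp
  also have "\<dots> < card {..<W}" using card by simp
  finally have lt: "card (\<Union>k\<in>K. bad k) < card {..<W}" .
  have "\<not> {..<W} \<subseteq> (\<Union>k\<in>K. bad k)"
  proof
    assume "{..<W} \<subseteq> (\<Union>k\<in>K. bad k)"
    moreover have "finite (\<Union>k\<in>K. bad k)" using K unfolding bad_def by auto
    ultimately have "card {..<W} \<le> card (\<Union>k\<in>K. bad k)" by (rule card_mono[rotated])
    thus False using lt by simp
  qed
  then obtain u where u: "u < W" "\<forall>k\<in>K. u \<notin> bad k" by blast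
  have good: "\<forall>k\<in>K. (b k + u) mod W + D + degree H \<le> W" using u unfolding bad_def by auto
  define S where "S = (\<Sum>k\<in>K. c k * [:0, 1::'a:] ^ ((b k + u) mod W))"
  have SH: "S * H = (\<Sum>k\<in>K. c k * [:0, 1:] ^ ((b k + u) mod W) * H)"
    unfolding S_def by (simp add: sum_distrib_right)
  have "degree (S * H) < W" unfolding SH
  proof (rule deg_sum_less[OF K W], intro ballI)
    fix k assume k: "k \<in> K"
    have "degree (c k * [:0, 1::'a:] ^ ((b k + u) mod W) * H) \<le> degree (c k) + (b k + u) mod W + degree H"
      using degree_mult_le[of "c k" "[:0, 1::'a:] ^ ((b k + u) mod W)"]
        degree_mult_le[of "c k * [:0, 1::'a:] ^ ((b k + u) mod W)" H] by (simp add: degree_X_pow)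
    thus "degree (c k * [:0, 1::'a:] ^ ((b k + u) mod W) * H) < W" using good deg k by fastforce
  qed
  have "([:0, 1:] ^ W - 1) dvd S * H - [:0, 1:] ^ u * ((\<Sum>k\<in>K. c k * [:0, 1:] ^ (b k)) * H)"
  proof -
    have "S * H - [:0, 1:] ^ u * ((\<Sum>k\<in>K. c k * [:0, 1:] ^ (b k)) * H) =
          (\<Sum>k\<in>K. c k * H * ([:0, 1:] ^ ((b k + u) mod W) - [:0, 1:] ^ (b k + u)))"
      unfolding S_def by (simp add: sum_distrib_right sum_distrib_left sum_subtractf algebra_simps power_add)
    moreover have "([:0, 1::'a:] ^ W - 1) dvd (\<Sum>k\<in>K. c k * H * ([:0, 1:] ^ ((b k + u) mod W) - [:0, 1:] ^ (b k + u)))"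
    proof (rule dvd_sum)
      fix k assume "k \<in> K"
      have "int W dvd (int ((b k + u) mod W) - int (b k + u))"
      proof -
        have "int (b k + u) = int ((b k + u) mod W) + int W * int ((b k + u) div W)"
          by (metis mod_mult_div_eq of_nat_add of_nat_mult)
        hence "int ((b k + u) mod W) - int (b k + u) = int W * (- int ((b k + u) div W))" by simp
        thus ?thesis by (rule dvdI)
      qed
      hence "([:0, 1::'a:] ^ W - 1) dvd [:0, 1:] ^ nat (int ((b k + u) mod W)) - [:0, 1:] ^ nat (int (b k + u))"
        by (rule dvd_X_pow_diff[OF dvd_refl W]) simp_all
      hence "([:0, 1::'a:] ^ W - 1) dvd [:0, 1:] ^ ((b k + u) mod W) - [:0, 1:] ^ (b k + u)"
        by (simp only: nat_int)
      thus "([:0, 1::'a:] ^ W - 1) dvd c k * H * ([:0, 1:] ^ ((b k + u) mod W) - [:0, 1:] ^ (b k + u))"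
        by (rule dvd_mult)
    qed
    ultimately show ?thesis by simp
  qed
  moreover have "([:0, 1:] ^ W - 1) dvd [:0, 1:] ^ u * ((\<Sum>k\<in>K. c k * [:0, 1:] ^ (b k)) * H)"
    using dv by (rule dvd_mult)
  ultimately have "([:0, 1:] ^ W - 1) dvd (S * H - [:0, 1:] ^ u * ((\<Sum>k\<in>K. c k * [:0, 1:] ^ (b k)) * H))
     + [:0, 1:] ^ u * ((\<Sum>k\<in>K. c k * [:0, 1:] ^ (b k)) * H)" by (rule dvd_add)
  hence "([:0, 1:] ^ W - 1) dvd S * H" by simp
  have "S * H = 0"
  proof (rule ccontr)
    assume "S * H \<noteq> 0"
    hence "degree ([:0, 1::'a:] ^ W - 1) \<le> degree (S * H)"
      using \<open>([:0, 1:] ^ W - 1) dvd S * H\<close> dvd_imp_degree_le by blast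
    moreover have "degree ([:0, 1::'a:] ^ W - 1) = W" by (rule degree_X_pow_minus_1[OF W])
    ultimately show False using \<open>degree (S * H) < W\<close> by linarith
  qed
  hence "S = 0" using H by simp
  thus ?thesis unfolding S_def by blast
qed


definition Qp :: "nat \<Rightarrow> nat \<Rightarrow> 'a::field poly" where
  "Qp N l = (\<Sum>i<l. [:0, 1:] ^ (N * i))"

lemma Qp_mult: "Qp N l * ([:0, 1:] ^ N - 1) = [:0, 1::'a::field:] ^ (N * l) - 1"
  unfolding Qp_def
proof (induction l)
  case (Suc l)
  have "(\<Sum>i<Suc l. [:0, 1::'a:] ^ (N * i)) * ([:0, 1:] ^ N - 1)
      = (\<Sum>i<l. [:0, 1::'a:] ^ (N * i)) * ([:0, 1:] ^ N - 1) + [:0, 1:] ^ (N * l) * ([:0, 1:] ^ N - 1)"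
    by (simp add: algebra_simps)
  also have "\<dots> = [:0, 1:] ^ (N * Suc l) - 1" using Suc by (simp add: algebra_simps power_add)
  finally show ?case .
qed simp

lemma Qp_X: assumes "N > 0" "l > 0" shows "[:0, 1::'a::field:] dvd Qp N l - 1"
proof -
  obtain m where l: "l = Suc m" using assms by (cases l) auto
  have "Qp N l - 1 = (\<Sum>i<m. [:0, 1::'a:] ^ (N * Suc i))"
    unfolding Qp_def l by (simp only: sum.lessThan_Suc_shift) simp
  also have "[:0, 1::'a:] dvd \<dots>"
  proof (rule dvd_sum)
    fix i
    show "[:0, 1::'a:] dvd [:0, 1:] ^ (N * Suc i)" by (rule dvd_power) (use assms in simp)
  qed
  finally show ?thesis .
qed

lemma Qp_const: assumes "p dvd [:0, 1:] ^ N - 1"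
  shows "p dvd Qp N l - of_nat l"
proof -
  have "Qp N l - of_nat l = (\<Sum>i<l. [:0, 1::'a::field:] ^ (N * i) - 1)"
    unfolding Qp_def by (simp add: sum_subtractf)
  also have "p dvd \<dots>"
    by (rule dvd_sum) (rule dvd_trans[OF assms pow_minus_dvd_mult])
  finally show ?thesis .
qed

lemma ring_aux1: "(a::'a::comm_ring_1) * b - 1 = b * (a - 1) + (b - 1)"
  by (simp add: algebra_simps)

lemma X_pow_gcd: assumes "p dvd [:0, 1:] ^ a - 1" "p dvd [:0, 1::'a::field:] ^ b - 1"
  shows "p dvd [:0, 1:] ^ gcd a b - 1"
  using assms
proof (induction a b rule: gcd_nat_induct)
  case (step m n)
  define q where "q = m div n"
  define r where "r = m mod n"
  have mr: "m = n * q + r" "r = m mod n" unfolding q_def r_def by simp_all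
  have mm: "[:0, 1::'a:] ^ m = [:0, 1:] ^ (n * q) * [:0, 1:] ^ r" by (subst mr(1)) (rule power_add)
  have eq: "[:0, 1::'a:] ^ m - 1 = [:0, 1:] ^ r * ([:0, 1:] ^ (n * q) - 1) + ([:0, 1:] ^ r - 1)"
    unfolding mm by (rule ring_aux1)
  have A: "p dvd [:0, 1::'a:] ^ r * ([:0, 1:] ^ (n * q) - 1)"
    using dvd_trans[OF step.prems(2) pow_minus_dvd_mult[of "[:0, 1::'a:]" n q]] by (rule dvd_mult)
  have "p dvd ([:0, 1::'a:] ^ m - 1) - [:0, 1:] ^ r * ([:0, 1:] ^ (n * q) - 1)"
    by (rule dvd_diff[OF step.prems(1) A])
  hence "p dvd [:0, 1::'a:] ^ r - 1" by (simp only: eq add_diff_cancel_left')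
  hence "p dvd [:0, 1::'a:] ^ gcd n (m mod n) - 1" using step.IH step.prems(2) mr(2) by simp
  thus ?case using step.hyps by (simp add: gcd_non_0_nat)
qed simp

lemma Qp_good:
  assumes irr: "irreducible p" and N: "N > 0" and l: "l > 0"
    and od: "coprime p [:0, 1:] \<Longrightarrow> p dvd [:0, 1:] ^ od - 1 \<and> od > 0 \<and> od dvd (l - 1)"
    and ch: "CHAR('a) dvd (l - 1)"
  shows "\<not> p dvd (Qp N l :: 'a::field poly)"
proof
  assume pd: "p dvd Qp N l"
  have nu: "\<not> p dvd 1" using irr by (simp add: irreducible_def)
  consider "coprime p [:0, 1:]" | "p dvd [:0, 1:]" using irreducible_X_cases[OF irr] by blast
  thus False
  proof cases
    case 2
    hence "p dvd Qp N l - 1" by (rule dvd_trans[OF _ Qp_X[OF N l]])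
    hence "p dvd Qp N l - (Qp N l - 1)" by (rule dvd_diff[OF pd])
    thus False using nu by simp
  next
    case 1
    with od have od: "p dvd [:0, 1:] ^ od - 1" "od > 0" "od dvd (l - 1)" by auto
    have a0: "p dvd [:0, 1:] ^ (od * N) - 1" by (rule dvd_trans[OF od(1) pow_minus_dvd_mult])
    have a: "p dvd [:0, 1:] ^ (N * od) - 1" using a0 by (simp add: mult.commute)
    have b: "p dvd [:0, 1:] ^ (N * l) - 1" using dvd_mult2[OF pd, of "[:0, 1:] ^ N - 1"] by (simp only: Qp_mult)
    have "gcd od l = 1"
    proof -
      have "gcd od l dvd l - 1" using od(3) by (meson dvd_trans gcd_dvd1)
      moreover have "gcd od l dvd l" by simp
      ultimately have "gcd od l dvd l - (l - 1)" by (rule dvd_diff_nat[rotated])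
      thus ?thesis using l by simp
    qed
    hence "gcd (N * od) (N * l) = N" by (simp add: gcd_mult_distrib_nat[symmetric])
    hence "p dvd [:0, 1:] ^ N - 1" using X_pow_gcd[OF a b] by simp
    hence "p dvd Qp N l - of_nat l" by (rule Qp_const)
    moreover have "(of_nat l :: 'a poly) = 1"
    proof -
      have "(of_nat (l - 1) :: 'a) = 0" using ch by (simp add: of_nat_eq_0_iff_char_dvd)
      moreover have "(of_nat (l - 1) :: 'a) = of_nat l - 1" using l by (simp add: of_nat_diff)
      ultimately have "(of_nat l :: 'a) = 1" by simp
      thus ?thesis by (simp add: of_nat_poly)
    qed
    ultimately have "p dvd Qp N l - 1" by simp
    hence "p dvd Qp N l - (Qp N l - 1)" by (rule dvd_diff[OF pd])
    thus False using nu by simp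
  qed
qed

lemma Qp_nz: assumes "l > 0" "N > 0" shows "Qp N l \<noteq> (0::'a::field poly)"
proof
  assume q0: "Qp N l = (0::'a poly)"
  have "[:0, 1::'a:] ^ (N * l) - 1 = Qp N l * ([:0, 1:] ^ N - 1)" by (simp only: Qp_mult)
  also have "\<dots> = 0" by (simp only: q0 mult_zero_left)
  finally have "[:0, 1::'a:] ^ (N * l) - 1 = 0" .
  hence "coeff ([:0, 1::'a:] ^ (N * l) - 1) 0 = 0" by simp
  moreover have "coeff ([:0, 1::'a:] ^ (N * l)) 0 = 0" using assms by (cases "N * l") simp_all
  ultimately show False by simp
qed

lemma cluster_interval:
  assumes "finite K" "k0 \<in> K" "k \<in> K" "b k0 \<le> i" "i < b k0 + D" "b k \<le> i" "i < b k + D"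
  shows "{min (b k0) (b k)..max (b k0) (b k)} \<subseteq> (\<Union>k\<in>K. {b k..<b k + (D::nat)})"
proof
  fix x assume "x \<in> {min (b k0) (b k)..max (b k0) (b k)}"
  hence x: "min (b k0) (b k) \<le> x" "x \<le> i" using assms by auto
  show "x \<in> (\<Union>k\<in>K. {b k..<b k + D})"
  proof (cases "b k0 \<le> x")
    case True
    have "x \<in> {b k0..<b k0 + D}" using True x assms(5) by simp
    thus ?thesis using assms(2) by (rule UN_I[rotated])
  next
    case False hence "b k \<le> x" using x by linarith
    hence "x \<in> {b k..<b k + D}" using x assms(7) by simp
    thus ?thesis using assms(3) by (rule UN_I[rotated])
  qed
qed

lemma cluster:
  fixes p :: "'k \<Rightarrow> 'a::field poly" and b :: "'k \<Rightarrow> nat" and g :: "'k \<Rightarrow> int"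
  assumes K: "finite K" and supp: "\<forall>k\<in>K. \<forall>i. coeff (p k) i \<noteq> 0 \<longrightarrow> b k \<le> i \<and> i < b k + D"
    and z: "(\<Sum>k\<in>K. p k) = 0"
    and gc: "\<forall>k\<in>K. \<forall>k'\<in>K. {min (b k) (b k')..max (b k) (b k')} \<subseteq> (\<Union>k\<in>K. {b k..<b k + D}) \<longrightarrow> g k = g k'"
  shows "(\<Sum>k\<in>K. rf_of_poly (p k) * Tpow (g k)) = 0"
proof -
  have part: "(\<Sum>k\<in>{k\<in>K. g k = \<gamma>}. p k) = 0" for \<gamma>
  proof (rule poly_eqI)
    fix i
    let ?K = "{k\<in>K. g k = \<gamma>}"
    show "coeff (\<Sum>k\<in>?K. p k) i = coeff 0 i"
    proof (cases "\<exists>k0\<in>?K. b k0 \<le> i \<and> i < b k0 + D")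
      case True
      then obtain k0 where k0': "k0 \<in> ?K" "b k0 \<le> i \<and> i < b k0 + D" by (rule bexE)
      hence k0: "k0 \<in> ?K" "b k0 \<le> i" "i < b k0 + D" by auto
      have out: "\<forall>k\<in>K - ?K. coeff (p k) i = 0"
      proof (rule ballI, rule ccontr)
        fix k assume k: "k \<in> K - ?K" "coeff (p k) i \<noteq> 0"
        have kK: "k \<in> K" using k(1) by blast
        have k0K: "k0 \<in> K" using k0(1) by blast
        have bi: "b k \<le> i" "i < b k + D" using supp kK k(2) by auto
        have "{min (b k0) (b k)..max (b k0) (b k)} \<subseteq> (\<Union>k\<in>K. {b k..<b k + D})"
          by (rule cluster_interval[OF K k0K kK k0(2,3) bi])
        hence "g k0 = g k" using gc k0K kK by blast
        thus False using k k0 by auto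
      qed
      have "(\<Sum>k\<in>K. coeff (p k) i) = 0" using z by (simp add: coeff_sum[symmetric])
      moreover have "(\<Sum>k\<in>K. coeff (p k) i) = (\<Sum>k\<in>K - ?K. coeff (p k) i) + (\<Sum>k\<in>?K. coeff (p k) i)"
        by (rule sum.subset_diff) (auto simp: K)
      moreover have "(\<Sum>k\<in>K - ?K. coeff (p k) i) = 0" using out by simp
      ultimately have "(\<Sum>k\<in>?K. coeff (p k) i) = 0" by simp
      thus ?thesis by (simp add: coeff_sum)
    next
      case False
      hence "\<forall>k\<in>?K. coeff (p k) i = 0" using supp by auto
      thus ?thesis by (simp add: coeff_sum)
    qed
  qed
  have "(\<Sum>k\<in>K. rf_of_poly (p k) * Tpow (g k))
      = (\<Sum>\<gamma>\<in>g ` K. \<Sum>k\<in>{k\<in>K. g k = \<gamma>}. rf_of_poly (p k) * Tpow (g k))"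
    by (rule sum.image_gen[OF K])
  also have "\<dots> = (\<Sum>\<gamma>\<in>g ` K. rf_of_poly (\<Sum>k\<in>{k\<in>K. g k = \<gamma>}. p k) * Tpow \<gamma>)"
    by (intro sum.cong refl) (simp add: rf_sum sum_distrib_right)
  also have "\<dots> = 0" using part by (simp add: rf_zero)
  finally show ?thesis .
qed

lemma interval_card:
  assumes "finite K" "{x..y} \<subseteq> (\<Union>k\<in>K. {b k..<b k + (D::nat)})"
  shows "y - x < card K * D \<or> y < x"
proof (cases "x \<le> y")
  case True
  have "card {x..y} \<le> card (\<Union>k\<in>K. {b k..<b k + D})" using assms by (intro card_mono) auto
  also have "\<dots> \<le> (\<Sum>k\<in>K. card {b k..<b k + D})" by (rule card_UN_le[OF assms(1)])
  also have "\<dots> = card K * D" by simp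
  finally have "card {x..y} \<le> card K * D" .
  moreover have "card {x..y} = Suc y - x" by (rule card_atLeastAtMost)
  ultimately show ?thesis using True by linarith
qed (rule disjI2, simp)


definition outer :: "'a::comm_ring_1 vec \<Rightarrow> 'a vec \<Rightarrow> 'a mat" where
  "outer u w = mat (dim_vec u) (dim_vec w) (\<lambda>(i,j). u $ i * w $ j)"

lemma outer_carrier[simp]: "outer u w \<in> carrier_mat (dim_vec u) (dim_vec w)"
  unfolding outer_def by simp

lemma outer_index[simp]: "i < dim_vec u \<Longrightarrow> j < dim_vec w \<Longrightarrow> outer u w $$ (i, j) = u $ i * w $ j"
  unfolding outer_def by simp

lemma outer_dims[simp]: "dim_row (outer u w) = dim_vec u" "dim_col (outer u w) = dim_vec w"
  unfolding outer_def by simp_all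

lemma mult_outer_left: assumes "A \<in> carrier_mat r n" "dim_vec x = n"
  shows "A * outer x y = outer (A *\<^sub>v x) y"
proof (rule eq_matI)
  fix i j assume ij: "i < dim_row (outer (A *\<^sub>v x) y)" "j < dim_col (outer (A *\<^sub>v x) y)"
  have "(A * outer x y) $$ (i, j) = row A i \<bullet> col (outer x y) j" using ij assms by simp
  also have "\<dots> = (\<Sum>k = 0..<n. A $$ (i, k) * (x $ k * y $ j))"
    using ij assms by (simp add: scalar_prod_def)
  also have "\<dots> = (\<Sum>k = 0..<n. A $$ (i, k) * x $ k) * y $ j"
    by (simp add: sum_distrib_right mult.assoc)
  also have "\<dots> = outer (A *\<^sub>v x) y $$ (i, j)" using ij assms by (simp add: scalar_prod_def)
  finally show "(A * outer x y) $$ (i, j) = outer (A *\<^sub>v x) y $$ (i, j)" .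
qed (use assms in auto)

lemma mult_outer_right: assumes "B \<in> carrier_mat n c" "dim_vec y = n"
  shows "outer x y * B = outer x (transpose_mat B *\<^sub>v y)"
proof (rule eq_matI)
  fix i j assume ij: "i < dim_row (outer x (transpose_mat B *\<^sub>v y))" "j < dim_col (outer x (transpose_mat B *\<^sub>v y))"
  have "(outer x y * B) $$ (i, j) = row (outer x y) i \<bullet> col B j" using ij assms by simp
  also have "\<dots> = (\<Sum>k = 0..<n. (x $ i * y $ k) * B $$ (k, j))"
    using ij assms by (simp add: scalar_prod_def)
  also have "\<dots> = x $ i * (\<Sum>k = 0..<n. B $$ (k, j) * y $ k)"
    by (simp add: sum_distrib_left mult.assoc mult.commute mult.left_commute)
  also have "\<dots> = outer x (transpose_mat B *\<^sub>v y) $$ (i, j)" using ij assms by (simp add: scalar_prod_def)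
  finally show "(outer x y * B) $$ (i, j) = outer x (transpose_mat B *\<^sub>v y) $$ (i, j)" .
qed (use assms in auto)

lemma mult_unit_vec_col: fixes A :: "int mat" assumes "A \<in> carrier_mat r n" "j < n"
  shows "A *\<^sub>v unit_vec n j = col A j"
proof (rule eq_vecI)
  fix i assume "i < dim_vec (col A j)"
  hence i: "i < r" using assms by simp
  have "(A *\<^sub>v unit_vec n j) $ i = row A i \<bullet> unit_vec n j" using i assms by simp
  also have "\<dots> = row A i $ j" by (rule scalar_prod_right_unit[OF assms(2)])
  also have "\<dots> = col A j $ i" using i assms by simp
  finally show "(A *\<^sub>v unit_vec n j) $ i = col A j $ i" .
qed (use assms in simp)

lemma transpose_mult_unit_vec_row: fixes A :: "int mat" assumes "A \<in> carrier_mat r n" "i < r"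
  shows "transpose_mat A *\<^sub>v unit_vec r i = row A i"
proof -
  have "transpose_mat A \<in> carrier_mat n r" using assms by simp
  hence "transpose_mat A *\<^sub>v unit_vec r i = col (transpose_mat A) i" by (rule mult_unit_vec_col[OF _ assms(2)])
  thus ?thesis using assms by simp
qed

definition nzrows :: "'a::zero mat \<Rightarrow> nat set" where
  "nzrows A = {i. i < dim_row A \<and> (\<exists>j<dim_col A. A $$ (i, j) \<noteq> 0)}"

lemma G_exists:
  fixes A :: "int mat"
  assumes "A \<in> carrier_mat r M"
  shows "\<exists>G c. G \<in> carrier_mat M r \<and> c \<noteq> 0 \<and> A * G * A = c \<cdot>\<^sub>m A"
  using assms
proof (induction "card (nzrows A)" arbitrary: A rule: less_induct)
  case less
  note A = less.prems
  show ?case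
  proof (cases "nzrows A = {}")
    case True
    have A0: "A = 0\<^sub>m r M"
      by (rule eq_matI) (use True A in \<open>auto simp: nzrows_def\<close>)
    show ?thesis
      by (rule exI[of _ "0\<^sub>m M r"], rule exI[of _ 1]) (simp add: A0)
  next
    case False
    then obtain i0 j0 where ij0: "i0 < r" "j0 < M" "A $$ (i0, j0) \<noteq> 0"
      using A unfolding nzrows_def by auto
    define a where "a = A $$ (i0, j0)"
    define u where "u = col A j0"
    define w where "w = row A i0"
    have du: "dim_vec u = r" and dw: "dim_vec w = M" using A unfolding u_def w_def by auto
    define A' where "A' = a \<cdot>\<^sub>m A - outer u w"
    have A'c: "A' \<in> carrier_mat r M" unfolding A'_def using A du dw by auto
    have A'i: "A' $$ (i, j) = a * A $$ (i, j) - A $$ (i, j0) * A $$ (i0, j)" if "i < r" "j < M" for i j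
      unfolding A'_def u_def w_def using that A ij0 by simp
    have sub: "nzrows A' \<subset> nzrows A"
    proof
      show "nzrows A' \<subseteq> nzrows A"
      proof
        fix i assume "i \<in> nzrows A'"
        then obtain j where j: "i < r" "j < M" "A' $$ (i, j) \<noteq> 0" using A'c unfolding nzrows_def by auto
        show "i \<in> nzrows A"
        proof (rule ccontr)
          assume "i \<notin> nzrows A"
          hence "\<forall>j<M. A $$ (i, j) = 0" using j A unfolding nzrows_def by auto
          thus False using j A'i ij0 by simp
        qed
      qed
      have "i0 \<notin> nzrows A'" using A'i A'c ij0 unfolding nzrows_def a_def by auto
      moreover have "i0 \<in> nzrows A" using ij0 A unfolding nzrows_def by auto
      ultimately show "nzrows A' \<noteq> nzrows A" by blast
    qed
    have fin: "finite (nzrows A)" unfolding nzrows_def by auto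
    have "card (nzrows A') < card (nzrows A)" by (rule psubset_card_mono[OF fin sub])
    then obtain G' c' where G': "G' \<in> carrier_mat M r" "c' \<noteq> 0" "A' * G' * A' = c' \<cdot>\<^sub>m A'"
      using less.hyps A'c by blast
    define ej :: "int vec" where "ej = unit_vec M j0"
    define ei :: "int vec" where "ei = unit_vec r i0"
    have dej: "dim_vec ej = M" and dei: "dim_vec ei = r" unfolding ej_def ei_def by auto
    define P where "P = a \<cdot>\<^sub>m 1\<^sub>m M - outer ej w"
    define P' where "P' = a \<cdot>\<^sub>m 1\<^sub>m r - outer u ei"
    define E where "E = outer ej ei"
    have Pc: "P \<in> carrier_mat M M" unfolding P_def using dej dw by auto
    have P'c: "P' \<in> carrier_mat r r" unfolding P'_def using du dei by auto
    have Ec: "E \<in> carrier_mat M r" unfolding E_def using dej dei by auto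
    have Aej: "A *\<^sub>v ej = u" unfolding ej_def u_def by (rule mult_unit_vec_col[OF A ij0(2)])
    have Aei: "transpose_mat A *\<^sub>v ei = w" unfolding ei_def w_def by (rule transpose_mult_unit_vec_row[OF A ij0(1)])
    have AP: "A * P = A'"
    proof -
      have "A * P = A * (a \<cdot>\<^sub>m 1\<^sub>m M) - A * outer ej w"
        unfolding P_def using A dej dw by (intro mult_minus_distrib_mat) auto
      also have "A * (a \<cdot>\<^sub>m 1\<^sub>m M) = a \<cdot>\<^sub>m (A * 1\<^sub>m M)" using A by (intro mult_smult_distrib) auto
      also have "A * 1\<^sub>m M = A" using A by simp
      also have "A * outer ej w = outer u w" using mult_outer_left[OF A dej] Aej by simp
      finally show ?thesis unfolding A'_def .
    qed
    have PA: "P' * A = A'"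
    proof -
      have "P' * A = (a \<cdot>\<^sub>m 1\<^sub>m r) * A - outer u ei * A"
        unfolding P'_def using A du dei by (intro minus_mult_distrib_mat) auto
      also have "(a \<cdot>\<^sub>m 1\<^sub>m r) * A = a \<cdot>\<^sub>m A" using A by (simp add: mult_smult_assoc_mat[of _ r r])
      also have "outer u ei * A = outer u w" using mult_outer_right[OF A dei] Aei by simp
      finally show ?thesis unfolding A'_def .
    qed
    have AEA: "A * E * A = outer u w"
    proof -
      have "A * E = outer u ei" unfolding E_def using mult_outer_left[OF A dej] Aej by simp
      thus ?thesis using mult_outer_right[OF A dei] Aei by simp
    qed
    define G where "G = P * G' * P' + c' \<cdot>\<^sub>m E"
    have Gc: "G \<in> carrier_mat M r" unfolding G_def using Pc G'(1) P'c Ec by auto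
    have "A * G * A = A * (P * G' * P') * A + A * (c' \<cdot>\<^sub>m E) * A"
    proof -
      have "A * G = A * (P * G' * P') + A * (c' \<cdot>\<^sub>m E)"
        unfolding G_def using A Pc G'(1) P'c Ec by (intro mult_add_distrib_mat) auto
      hence "A * G * A = (A * (P * G' * P') + A * (c' \<cdot>\<^sub>m E)) * A" by simp
      also have "\<dots> = A * (P * G' * P') * A + A * (c' \<cdot>\<^sub>m E) * A"
        using A Pc G'(1) P'c Ec by (intro add_mult_distrib_mat) auto
      finally show ?thesis .
    qed
    also have "A * (P * G' * P') * A = c' \<cdot>\<^sub>m A'"
    proof -
      have c1: "A * (P * G' * P') = A * (P * G') * P'"
        using A Pc G'(1) P'c by (intro assoc_mult_mat[symmetric]) auto
      have c2: "A * (P * G') = A * P * G'"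
        using A Pc G'(1) by (intro assoc_mult_mat[symmetric]) auto
      have "A * (P * G' * P') = A' * G' * P'" using c1 c2 AP by simp
      hence "A * (P * G' * P') * A = A' * G' * P' * A" by simp
      also have "\<dots> = A' * G' * (P' * A)"
        using A'c G'(1) P'c A by (intro assoc_mult_mat) auto
      also have "\<dots> = c' \<cdot>\<^sub>m A'" using PA G'(3) by simp
      finally show ?thesis .
    qed
    also have "A * (c' \<cdot>\<^sub>m E) * A = c' \<cdot>\<^sub>m (outer u w)"
    proof -
      have "A * (c' \<cdot>\<^sub>m E) = c' \<cdot>\<^sub>m (A * E)" using A Ec by (rule mult_smult_distrib)
      hence "A * (c' \<cdot>\<^sub>m E) * A = c' \<cdot>\<^sub>m (A * E) * A" by simp
      also have "\<dots> = c' \<cdot>\<^sub>m (A * E * A)" using A Ec by (intro mult_smult_assoc_mat) auto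
      finally show ?thesis using AEA by simp
    qed
    also have "c' \<cdot>\<^sub>m A' + c' \<cdot>\<^sub>m outer u w = (c' * a) \<cdot>\<^sub>m A"
      by (rule eq_matI) (use A du dw in \<open>auto simp: A'_def algebra_simps\<close>)
    finally have "A * G * A = (c' * a) \<cdot>\<^sub>m A" .
    moreover have "c' * a \<noteq> 0" using G'(2) ij0 a_def by simp
    ultimately show ?thesis using Gc by blast
  qed
qed


lemma G_fun:
  fixes v :: "nat \<Rightarrow> nat \<Rightarrow> int"
  shows "\<exists>g c. c > 0 \<and> (\<forall>k<r. \<forall>j<M. (\<Sum>l<r. (\<Sum>i<M. v k i * g i l) * v l j) = c * v k j)"
proof -
  define A where "A = mat r M (\<lambda>(k, i). v k i)"
  have A: "A \<in> carrier_mat r M" unfolding A_def by simp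
  obtain G c0 where G: "G \<in> carrier_mat M r" "c0 \<noteq> 0" "A * G * A = c0 \<cdot>\<^sub>m A"
    using G_exists[OF A] by blast
  have ent: "(\<Sum>l<r. (\<Sum>i<M. v k i * G $$ (i, l)) * v l j) = c0 * v k j" if kj: "k < r" "j < M" for k j
  proof -
    have "(A * G * A) $$ (k, j) = c0 * v k j" using G(3) kj A by (simp add: A_def)
    moreover have "(A * G * A) $$ (k, j) = (\<Sum>l<r. (A * G) $$ (k, l) * A $$ (l, j))"
    proof -
      have "(A * G * A) $$ (k, j) = row (A * G) k \<bullet> col A j" using kj A G(1) by (intro index_mult_mat) auto
      also have "\<dots> = (\<Sum>l<r. (A * G) $$ (k, l) * A $$ (l, j))"
        unfolding scalar_prod_def using kj A G(1) by (intro sum.cong) auto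
      finally show ?thesis .
    qed
    moreover have "(A * G) $$ (k, l) = (\<Sum>i<M. v k i * G $$ (i, l))" if "l < r" for l
      using kj that A G(1) by (simp add: scalar_prod_def atLeast0LessThan A_def)
    moreover have "A $$ (l, j) = v l j" if "l < r" for l using that kj by (simp add: A_def)
    ultimately show ?thesis by simp
  qed
  define g where "g i l = sgn c0 * G $$ (i, l)" for i l
  have "(\<Sum>l<r. (\<Sum>i<M. v k i * g i l) * v l j) = \<bar>c0\<bar> * v k j" if kj: "k < r" "j < M" for k j
  proof -
    have "(\<Sum>l<r. (\<Sum>i<M. v k i * g i l) * v l j) = sgn c0 * (\<Sum>l<r. (\<Sum>i<M. v k i * G $$ (i, l)) * v l j)"
      unfolding g_def by (simp add: sum_distrib_left sum_distrib_right algebra_simps)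
    also have "\<dots> = sgn c0 * (c0 * v k j)" using ent[OF kj] by simp
    also have "\<dots> = (sgn c0 * c0) * v k j" by (rule mult.assoc[symmetric])
    also have "sgn c0 * c0 = \<bar>c0\<bar>" by (simp add: sgn_if)
    finally show ?thesis .
  qed
  moreover have "\<bar>c0\<bar> > 0" using G(2) by simp
  ultimately show ?thesis by blast
qed

lemma dvd_small_zero: fixes x W :: int assumes "W dvd x" "\<bar>x\<bar> < W" shows "x = 0"
proof (rule ccontr)
  assume "x \<noteq> 0"
  hence "\<bar>W\<bar> \<le> \<bar>x\<bar>" using dvd_imp_le_int assms(1) by blast
  thus False using assms(2) by simp
qed

definition LAprop :: "(nat \<Rightarrow> nat \<Rightarrow> int) \<Rightarrow> nat set \<Rightarrow> nat \<Rightarrow> int \<Rightarrow> int \<Rightarrow> bool" where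
  "LAprop v S M c B \<longleftrightarrow> (\<forall>e d L0 W Dd. c * L0 dvd W \<longrightarrow> B * (Dd + 1) < W \<longrightarrow> Dd \<ge> 0 \<longrightarrow>
     (\<forall>k\<in>S. \<bar>d k\<bar> \<le> Dd) \<longrightarrow> (\<forall>k\<in>S. W dvd ((\<Sum>i<M. v k i * e i) - d k)) \<longrightarrow>
     (\<exists>e'. (\<forall>k\<in>S. (\<Sum>i<M. v k i * e' i) = d k) \<and> (\<forall>i<M. L0 dvd (e' i - e i))))"

lemma LA_fun:
  fixes v :: "nat \<Rightarrow> nat \<Rightarrow> int"
  shows "\<exists>c>0. \<exists>B. LAprop v {..<r} M c B"
proof -
  obtain g c where gc: "c > 0" "\<forall>k<r. \<forall>j<M. (\<Sum>l<r. (\<Sum>i<M. v k i * g i l) * v l j) = c * v k j"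
    using G_fun[of r M v] by blast
  define h where "h k l = (\<Sum>i<M. v k i * g i l)" for k l
  define Bh where "Bh = (\<Sum>k<r. \<Sum>l<r. \<bar>h k l\<bar>)"
  have Bh: "\<bar>h k l\<bar> \<le> Bh" if "k < r" "l < r" for k l
  proof -
    have "\<bar>h k l\<bar> \<le> (\<Sum>l<r. \<bar>h k l\<bar>)" using that by (intro member_le_sum) auto
    also have "\<dots> \<le> Bh" unfolding Bh_def using that by (intro member_le_sum[of k]) (auto intro: sum_nonneg)
    finally show ?thesis .
  qed
  define B where "B = int r * Bh + c + 1"
  have Bh0: "Bh \<ge> 0" unfolding Bh_def by (auto intro: sum_nonneg)
  show ?thesis
  proof (rule exI[of _ c], intro conjI gc(1) exI[of _ B], unfold LAprop_def, intro allI impI)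
    fix e d :: "nat \<Rightarrow> int" and L0 W Dd :: int
    assume cl: "c * L0 dvd W" and BW: "B * (Dd + 1) < W" and Dd0: "Dd \<ge> 0"
      and dD': "\<forall>k\<in>{..<r}. \<bar>d k\<bar> \<le> Dd" and cong': "\<forall>k\<in>{..<r}. W dvd ((\<Sum>i<M. v k i * e i) - d k)"
    have dD: "\<forall>k<r. \<bar>d k\<bar> \<le> Dd" and cong: "\<forall>k<r. W dvd ((\<Sum>i<M. v k i * e i) - d k)"
      using dD' cong' by auto
    define Ae where "Ae k = (\<Sum>i<M. v k i * e i)" for k
    define w where "w k = Ae k - d k" for k
    have Ww: "W dvd w k" if "k < r" for k using cong that unfolding w_def Ae_def by blast
    have hA: "(\<Sum>l<r. h k l * Ae l) = c * Ae k" if "k < r" for k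
    proof -
      have "(\<Sum>l<r. h k l * Ae l) = (\<Sum>l<r. \<Sum>j<M. h k l * v l j * e j)"
        unfolding Ae_def by (simp add: sum_distrib_left mult.assoc)
      also have "\<dots> = (\<Sum>j<M. \<Sum>l<r. h k l * v l j * e j)" by (rule sum.swap)
      also have "\<dots> = (\<Sum>j<M. (\<Sum>l<r. h k l * v l j) * e j)" by (simp add: sum_distrib_right)
      also have "\<dots> = (\<Sum>j<M. c * v k j * e j)" using gc(2) that unfolding h_def by simp
      also have "\<dots> = c * Ae k" unfolding Ae_def by (simp add: sum_distrib_left mult.assoc)
      finally show ?thesis .
    qed
    have hd: "(\<Sum>l<r. h k l * d l) = c * d k" if k: "k < r" for k
    proof -
      define x where "x = (\<Sum>l<r. h k l * d l) - c * d k"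
      have "(\<Sum>l<r. h k l * d l) = (\<Sum>l<r. h k l * Ae l) - (\<Sum>l<r. h k l * w l)"
        unfolding w_def by (simp add: algebra_simps sum_subtractf)
      hence s1: "(\<Sum>l<r. h k l * d l) = c * Ae k - (\<Sum>l<r. h k l * w l)" using hA[OF k] by simp
      have x: "x = c * w k - (\<Sum>l<r. h k l * w l)" unfolding x_def s1 w_def by (simp add: right_diff_distrib)
      have "W dvd x" unfolding x using Ww k by (intro dvd_diff dvd_sum) (auto intro: dvd_mult)
      have "\<bar>x\<bar> \<le> \<bar>\<Sum>l<r. h k l * d l\<bar> + c * \<bar>d k\<bar>" unfolding x_def
        using abs_triangle_ineq4[of "\<Sum>l<r. h k l * d l" "c * d k"] gc(1) by (simp add: abs_mult)
      also have "\<bar>\<Sum>l<r. h k l * d l\<bar> \<le> (\<Sum>l<r. Bh * Dd)"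
      proof -
        have "\<bar>\<Sum>l<r. h k l * d l\<bar> \<le> (\<Sum>l<r. \<bar>h k l * d l\<bar>)" by (rule sum_abs)
        also have "\<dots> \<le> (\<Sum>l<r. Bh * Dd)"
          by (rule sum_mono) (use Bh k dD Bh0 in \<open>auto simp: abs_mult intro: mult_mono\<close>)
        finally show ?thesis .
      qed
      also have "c * \<bar>d k\<bar> \<le> c * Dd" using dD k gc(1) by simp
      finally have "\<bar>x\<bar> \<le> int r * Bh * Dd + c * Dd" by simp
      also have "\<dots> < W"
      proof -
        have "int r * Bh * Dd + c * Dd \<le> B * Dd" unfolding B_def using Dd0 by (simp add: algebra_simps)
        also have "\<dots> \<le> B * (Dd + 1)" using Bh0 gc(1) unfolding B_def by (simp add: algebra_simps)
        finally show ?thesis using BW by simp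
      qed
      finally have "x = 0" using \<open>W dvd x\<close> dvd_small_zero by blast
      thus ?thesis unfolding x_def by simp
    qed
    define z where "z l = w l div c" for l
    have cz: "c * z l = w l" if "l < r" for l
    proof -
      have "c dvd W" using cl by (rule dvd_mult_left)
      hence "c dvd w l" using Ww[OF that] by (rule dvd_trans)
      thus ?thesis unfolding z_def by simp
    qed
    have L0z: "L0 dvd z l" if lr: "l < r" for l
    proof -
      obtain t where t: "w l = W * t" using Ww[OF lr] by (auto elim: dvdE)
      obtain s where s: "W = c * L0 * s" using cl by (auto elim: dvdE)
      have "c * z l = c * (L0 * s * t)" using cz[OF lr] t s by (simp add: algebra_simps)
      hence "z l = L0 * s * t" using gc(1) by simp
      thus ?thesis by simp
    qed
    have hz: "(\<Sum>l<r. h k l * z l) = w k" if k: "k < r" for k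
    proof -
      have "c * (\<Sum>l<r. h k l * z l) = (\<Sum>l<r. h k l * w l)"
        by (simp add: sum_distrib_left algebra_simps cz flip: cz)
      also have "\<dots> = (\<Sum>l<r. h k l * Ae l) - (\<Sum>l<r. h k l * d l)"
        unfolding w_def by (simp add: algebra_simps sum_subtractf)
      also have "\<dots> = c * w k" using hA[OF k] hd[OF k] unfolding w_def by (simp add: algebra_simps)
      finally show ?thesis using gc(1) by simp
    qed
    define e' where "e' i = e i - (\<Sum>l<r. g i l * z l)" for i
    have "(\<Sum>i<M. v k i * e' i) = d k" if k: "k < r" for k
    proof -
      have "(\<Sum>i<M. v k i * e' i) = Ae k - (\<Sum>i<M. \<Sum>l<r. v k i * g i l * z l)"
        unfolding e'_def Ae_def by (simp add: algebra_simps sum_subtractf sum_distrib_left)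
      also have "(\<Sum>i<M. \<Sum>l<r. v k i * g i l * z l) = (\<Sum>l<r. h k l * z l)"
        unfolding h_def by (subst sum.swap) (simp add: sum_distrib_right)
      also have "\<dots> = w k" by (rule hz[OF k])
      finally show ?thesis unfolding w_def by simp
    qed
    moreover have "L0 dvd (e' i - e i)" for i
    proof -
      have "L0 dvd (\<Sum>l<r. g i l * z l)" by (rule dvd_sum) (use L0z in auto)
      thus ?thesis unfolding e'_def by simp
    qed
    ultimately show "\<exists>e'. (\<forall>k\<in>{..<r}. (\<Sum>i<M. v k i * e' i) = d k) \<and> (\<forall>i<M. L0 dvd e' i - e i)" by blast
  qed
qed


lemma LA_family:
  fixes v :: "nat \<Rightarrow> nat \<Rightarrow> int"
  shows "\<exists>c>0. \<exists>B. \<forall>S. S \<subseteq> {..<r} \<longrightarrow> LAprop v S M c B"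
proof -
  have one: "\<exists>c B. c > 0 \<and> LAprop v S M c B" if S: "S \<subseteq> {..<r}" for S
  proof -
    define vS where "vS k i = (if k \<in> S then v k i else 0)" for k i
    obtain c where c: "c > 0 \<and> (\<exists>B. LAprop vS {..<r} M c B)" using LA_fun[of vS r M] by (rule exE)
    then obtain B where cB: "LAprop vS {..<r} M c B" by (elim conjE exE)
    have "LAprop v S M c B" unfolding LAprop_def
    proof (intro allI impI)
      fix e d L0 W Dd :: "_"
      assume h: "c * L0 dvd W" "B * (Dd + 1) < W" "Dd \<ge> (0::int)" "\<forall>k\<in>S. \<bar>d k\<bar> \<le> Dd"
        "\<forall>k\<in>S. W dvd ((\<Sum>i<M. v k i * e i) - d k)"
      define dS where "dS k = (if k \<in> S then d k else 0)" for k
      have h4: "\<forall>k\<in>{..<r}. \<bar>dS k\<bar> \<le> Dd" using h(3,4) unfolding dS_def by auto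
      have h5: "\<forall>k\<in>{..<r}. W dvd ((\<Sum>i<M. vS k i * e i) - dS k)" using h(5) unfolding dS_def vS_def by auto
      have "\<exists>e'. (\<forall>k\<in>{..<r}. (\<Sum>i<M. vS k i * e' i) = dS k) \<and> (\<forall>i<M. L0 dvd (e' i - e i))"
        using cB h(1,2,3) h4 h5 unfolding LAprop_def by blast
      then obtain e' where e': "\<forall>k\<in>{..<r}. (\<Sum>i<M. vS k i * e' i) = dS k" "\<forall>i<M. L0 dvd (e' i - e i)"
        by blast
      have "\<forall>k\<in>S. (\<Sum>i<M. v k i * e' i) = d k"
      proof
        fix k assume k: "k \<in> S"
        hence "k \<in> {..<r}" using S by auto
        hence "(\<Sum>i<M. vS k i * e' i) = dS k" using e'(1) by blast
        thus "(\<Sum>i<M. v k i * e' i) = d k" using k unfolding vS_def dS_def by simp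
      qed
      thus "\<exists>e'. (\<forall>k\<in>S. (\<Sum>i<M. v k i * e' i) = d k) \<and> (\<forall>i<M. L0 dvd (e' i - e i))" using e'(2) by blast
    qed
    thus ?thesis using c by blast
  qed
  have "\<forall>S\<in>Pow {..<r}. \<exists>cB. fst cB > 0 \<and> LAprop v S M (fst cB) (snd cB)"
    using one by fastforce
  then obtain cB where cfB: "\<forall>S \<in> Pow {..<r}. fst (cB S) > 0 \<and> LAprop v S M (fst (cB S)) (snd (cB S))"
    by (metis (no_types, lifting) bchoice)
  define cf where "cf S = fst (cB S)" for S
  define Bf where "Bf S = snd (cB S)" for S
  define c where "c = (\<Prod>S\<in>Pow {..<r}. cf S)"
  define B where "B = (\<Sum>S\<in>Pow {..<r}. \<bar>Bf S\<bar>)"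
  have c0: "c > 0" unfolding c_def cf_def using cfB by (intro prod_pos) auto
  have "LAprop v S M c B" if S: "S \<subseteq> {..<r}" for S
    unfolding LAprop_def
  proof (intro allI impI)
    fix e d L0 W Dd :: "_"
    assume h: "c * L0 dvd W" "B * (Dd + 1) < W" "Dd \<ge> (0::int)" "\<forall>k\<in>S. \<bar>d k\<bar> \<le> Dd"
        "\<forall>k\<in>S. W dvd ((\<Sum>i<M. v k i * e i) - d k)"
    have SP: "S \<in> Pow {..<r}" using S by simp
    have "cf S dvd c" unfolding c_def using SP by (intro dvd_prodI) auto
    hence "cf S * L0 dvd c * L0" by (rule mult_dvd_mono) simp
    hence h1: "cf S * L0 dvd W" using h(1) by (rule dvd_trans)
    have "Bf S \<le> \<bar>Bf S\<bar>" by simp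
    also have "\<bar>Bf S\<bar> \<le> B" unfolding B_def using SP by (intro member_le_sum) auto
    finally have "Bf S * (Dd + 1) \<le> B * (Dd + 1)" using h(3) by (intro mult_right_mono) auto
    hence h2: "Bf S * (Dd + 1) < W" using h(2) by simp
    have "LAprop v S M (cf S) (Bf S)" using cfB SP unfolding cf_def Bf_def by blast
    thus "\<exists>e'. (\<forall>k\<in>S. (\<Sum>i<M. v k i * e' i) = d k) \<and> (\<forall>i<M. L0 dvd (e' i - e i))"
      unfolding LAprop_def using h1 h2 h(3,4,5) by blast
  qed
  thus ?thesis using c0 by blast
qed


definition Ix :: "nat \<Rightarrow> (nat \<Rightarrow> (nat \<Rightarrow> nat) \<Rightarrow> 'a::zero poly) \<Rightarrow> (nat \<times> (nat \<Rightarrow> nat)) set" where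
  "Ix J f = {(j, \<alpha>). j < J \<and> f j \<alpha> \<noteq> 0}"

lemma finite_Ix: assumes "\<forall>j<J. finite {\<alpha>. f j \<alpha> \<noteq> 0}" shows "finite (Ix J f)"
proof -
  have "Ix J f = (\<Union>j<J. (\<lambda>\<alpha>. (j, \<alpha>)) ` {\<alpha>. f j \<alpha> \<noteq> 0})" unfolding Ix_def by auto
  thus ?thesis using assms by simp
qed

lemma card_slice_le: assumes "finite (Ix J f)" "j < J" shows "card {\<alpha>. f j \<alpha> \<noteq> 0} \<le> card (Ix J f)"
proof -
  have "card {\<alpha>. f j \<alpha> \<noteq> 0} = card ((\<lambda>\<alpha>. (j, \<alpha>)) ` {\<alpha>. f j \<alpha> \<noteq> 0})" by (simp add: card_image inj_on_def)
  also have "\<dots> \<le> card (Ix J f)" using assms by (intro card_mono) (auto simp: Ix_def)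
  finally show ?thesis .
qed

lemma lin_diff: "(\<Sum>i<M. (int (\<alpha> i) - int (\<beta> i)) * y i) = lin M \<alpha> y - lin M \<beta> y"
  unfolding lin_def by (simp add: sum_subtractf left_diff_distrib)

lemma X_pow_monom: "[:0, 1::'a::field:] ^ n = monom 1 n"
  by (induction n) (auto simp: mult_monom monom_Suc)

lemma coeff_mult_X_pow: "coeff (p * [:0, 1::'a::field:] ^ n) i = (if n \<le> i then coeff p (i - n) else 0)"
  unfolding X_pow_monom by (simp add: mult.commute[of p] coeff_monom_mult)

lemma X_pow_minus_1_nz: assumes "N > 0" shows "[:0, 1::'a::field:] ^ N - 1 \<noteq> 0"
  using degree_X_pow_minus_1[OF assms, where 'a='a] assms by auto


lemma exact_solution:
  fixes f :: "nat \<Rightarrow> (nat \<Rightarrow> nat) \<Rightarrow> 'a::field poly" and x :: "nat \<Rightarrow> int"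
    and h :: "nat \<Rightarrow> (nat \<times> (nat \<Rightarrow> nat)) \<times> (nat \<times> (nat \<Rightarrow> nat))"
  assumes fin: "\<forall>j<J. finite {\<alpha>. f j \<alpha> \<noteq> 0}"
    and enum: "bij_betw h {..<r} (Ix J f \<times> Ix J f)"
    and vdef: "\<forall>k i. v k i = int (snd (fst (h k)) i) - int (snd (snd (h k)) i)"
    and LA: "\<forall>Ss. Ss \<subseteq> {..<r} \<longrightarrow> LAprop v Ss M c B"
    and Ddef: "\<forall>j<J. \<forall>\<alpha>. f j \<alpha> \<noteq> 0 \<longrightarrow> degree (f j \<alpha>) < D"
    and nI: "card (Ix J f) = nI"
    and N: "N > 0" and Wdef: "W = N * l" and cL: "int N = c * L0"
    and l1: "l > nI * (D + 1)" and l2: "int l > B * (int nI * int D + 1)"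
    and dv: "\<forall>j<J. rf_dvd (Qp N l) (eval_Tpow M (f j) x)"
  shows "\<exists>e'. (\<forall>j<J. eval_Tpow M (f j) e' = 0) \<and> (\<forall>i<M. L0 dvd (e' i - x i))"
proof -
  have finI: "finite (Ix J f)" by (rule finite_Ix[OF fin])
  have W0: "W > 0" using N l1 Wdef by simp
  define a where "a \<alpha> = lin M \<alpha> x" for \<alpha>
  define t where "t = (\<Sum>p\<in>Ix J f. nat \<bar>a (snd p)\<bar>)"
  define b where "b \<alpha> = nat (a \<alpha> + int t)" for \<alpha>
  have at: "a \<alpha> + int t \<ge> 0" if "j < J" "f j \<alpha> \<noteq> 0" for j \<alpha>
  proof -
    have "(j, \<alpha>) \<in> Ix J f" using that by (simp add: Ix_def)
    hence "nat \<bar>a \<alpha>\<bar> \<le> t" unfolding t_def using finI by (metis (no_types, lifting) member_le_sum snd_conv zero_le)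
    thus ?thesis by linarith
  qed
  have rot: "\<exists>u. (\<Sum>\<alpha>\<in>{\<alpha>. f j \<alpha> \<noteq> 0}. f j \<alpha> * [:0, 1:] ^ ((b \<alpha> + u) mod W)) = 0" if j: "j < J" for j
  proof -
    let ?A = "{\<alpha>. f j \<alpha> \<noteq> 0}"
    define R where "R = (\<Sum>\<alpha>\<in>?A. f j \<alpha> * [:0, 1::'a:] ^ b \<alpha>)"
    have "eval_Tpow M (f j) x * rf_of_poly ([:0, 1:] ^ t) = rf_of_poly R"
      unfolding eval_alt R_def b_def a_def[symmetric] using at j by (intro sum_shift) auto
    hence QR: "Qp N l dvd R" using dv j rf_dvd_imp by blast
    have "Qp N l * ([:0, 1::'a:] ^ N - 1) dvd R * ([:0, 1:] ^ N - 1)" using QR by (rule mult_dvd_mono) simp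
    hence dvW: "([:0, 1::'a:] ^ W - 1) dvd R * ([:0, 1:] ^ N - 1)" unfolding Wdef by (simp only: Qp_mult)
    have cA: "card ?A \<le> nI" using card_slice_le[OF finI j] nI by simp
    have "card ?A * (D + degree ([:0, 1::'a:] ^ N - 1)) = card ?A * (D + N)"
      using degree_X_pow_minus_1[OF N, where 'a='a] by simp
    also have "\<dots> \<le> nI * (D + N)" using cA by (rule mult_right_mono) simp
    also have "\<dots> \<le> nI * (D + 1) * N" using N by (simp add: algebra_simps)
    also have "\<dots> < l * N" using l1 N by simp
    also have "\<dots> = W" using Wdef by simp
    finally have cW: "card ?A * (D + degree ([:0, 1::'a:] ^ N - 1)) < W" .
    show ?thesis
      by (rule rotate[OF _ X_pow_minus_1_nz[OF N] W0 _ cW dvW[unfolded R_def]])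
         (use fin j Ddef in auto)
  qed
  have "\<forall>j. \<exists>uj. j < J \<longrightarrow> (\<Sum>\<alpha>\<in>{\<alpha>. f j \<alpha> \<noteq> 0}. f j \<alpha> * [:0, 1::'a:] ^ ((b \<alpha> + uj) mod W)) = 0"
    using rot by blast
  from choice[OF this] obtain u where u: "\<forall>j<J. (\<Sum>\<alpha>\<in>{\<alpha>. f j \<alpha> \<noteq> 0}. f j \<alpha> * [:0, 1::'a:] ^ ((b \<alpha> + u j) mod W)) = 0"
    by blast
  define bb where "bb j \<alpha> = (b \<alpha> + u j) mod W" for j \<alpha>
  define I where "I j = (\<Union>\<alpha>\<in>{\<alpha>. f j \<alpha> \<noteq> 0}. {bb j \<alpha>..<bb j \<alpha> + D})" for j
  define rel where "rel pq \<longleftrightarrow> fst (fst pq) = fst (snd pq) \<and>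
     {min (bb (fst (fst pq)) (snd (fst pq))) (bb (fst (fst pq)) (snd (snd pq))) ..
      max (bb (fst (fst pq)) (snd (fst pq))) (bb (fst (fst pq)) (snd (snd pq)))} \<subseteq> I (fst (fst pq))" for pq
  define Ss where "Ss = {k \<in> {..<r}. rel (h k)}"
  define d where "d k = int (bb (fst (fst (h k))) (snd (fst (h k)))) - int (bb (fst (fst (h k))) (snd (snd (h k))))" for k
  define Dd where "Dd = int nI * int D"
  have "Ss \<subseteq> {..<r}" unfolding Ss_def by auto
  hence LAS: "LAprop v Ss M c B" using LA by blast
  have h1: "c * L0 dvd int W" using cL Wdef by simp
  have h2: "B * (Dd + 1) < int W"
  proof -
    have "B * (Dd + 1) < int l" using l2 unfolding Dd_def by simp
    also have "int l \<le> int W" using Wdef N by (simp del: of_nat_mult)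
    finally show ?thesis .
  qed
  have h3: "Dd \<ge> 0" unfolding Dd_def by simp
  have hmem: "h k \<in> Ix J f \<times> Ix J f" if "k < r" for k
    using enum that unfolding bij_betw_def by auto
  have h4: "\<forall>k\<in>Ss. \<bar>d k\<bar> \<le> Dd"
  proof
    fix k assume k: "k \<in> Ss"
    obtain j1 \<alpha>1 j2 \<alpha>2 where hk: "h k = ((j1, \<alpha>1), (j2, \<alpha>2))" by (metis prod.collapse)
    have kr: "k < r" and rk: "rel (h k)" using k unfolding Ss_def by auto
    have j1: "j1 < J" using hmem[OF kr] hk by (simp add: Ix_def)
    have sub: "{min (bb j1 \<alpha>1) (bb j1 \<alpha>2) .. max (bb j1 \<alpha>1) (bb j1 \<alpha>2)} \<subseteq> I j1"
      using rk hk unfolding rel_def by auto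
    have finA: "finite {\<alpha>. f j1 \<alpha> \<noteq> 0}" using fin j1 by simp
    have "max (bb j1 \<alpha>1) (bb j1 \<alpha>2) - min (bb j1 \<alpha>1) (bb j1 \<alpha>2) < card {\<alpha>. f j1 \<alpha> \<noteq> 0} * D"
      using interval_card[OF finA sub[unfolded I_def]] by auto
    also have "\<dots> \<le> nI * D" using card_slice_le[OF finI j1] nI by simp
    finally have "max (bb j1 \<alpha>1) (bb j1 \<alpha>2) - min (bb j1 \<alpha>1) (bb j1 \<alpha>2) < nI * D" .
    hence lt: "int (max (bb j1 \<alpha>1) (bb j1 \<alpha>2) - min (bb j1 \<alpha>1) (bb j1 \<alpha>2)) < int nI * int D"
      by (simp only: of_nat_mult[symmetric] of_nat_less_iff)
    have "\<bar>int (bb j1 \<alpha>1) - int (bb j1 \<alpha>2)\<bar> = int (max (bb j1 \<alpha>1) (bb j1 \<alpha>2) - min (bb j1 \<alpha>1) (bb j1 \<alpha>2))"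
      by (cases "bb j1 \<alpha>1 \<le> bb j1 \<alpha>2") (simp_all add: max_def min_def of_nat_diff)
    thus "\<bar>d k\<bar> \<le> Dd" unfolding d_def Dd_def hk using lt by simp
  qed
  have cong_bb: "int W dvd (a \<alpha> - int (bb j \<alpha>) + int t + int (u j))" if "j < J" "f j \<alpha> \<noteq> 0" for j \<alpha>
  proof -
    have ib: "int (b \<alpha>) = a \<alpha> + int t" unfolding b_def using at[OF that] by simp
    have "int (bb j \<alpha>) = (int (b \<alpha>) + int (u j)) mod int W" unfolding bb_def by (simp add: zmod_int)
    hence "a \<alpha> - int (bb j \<alpha>) + int t + int (u j) = (int (b \<alpha>) + int (u j)) - (int (b \<alpha>) + int (u j)) mod int W"
      using ib by simp
    also have "\<dots> = int W * ((int (b \<alpha>) + int (u j)) div int W)" by (simp add: minus_mod_eq_mult_div)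
    finally show ?thesis by simp
  qed
  have h5: "\<forall>k\<in>Ss. int W dvd ((\<Sum>i<M. v k i * x i) - d k)"
  proof
    fix k assume k: "k \<in> Ss"
    obtain j1 \<alpha>1 j2 \<alpha>2 where hk: "h k = ((j1, \<alpha>1), (j2, \<alpha>2))" by (metis prod.collapse)
    have kr: "k < r" and rk: "rel (h k)" using k unfolding Ss_def by auto
    have mem: "j1 < J" "f j1 \<alpha>1 \<noteq> 0" "j2 < J" "f j2 \<alpha>2 \<noteq> 0" using hmem[OF kr] hk by (auto simp: Ix_def)
    have jj: "j2 = j1" using rk hk unfolding rel_def by simp
    have "(\<Sum>i<M. v k i * x i) = a \<alpha>1 - a \<alpha>2" unfolding a_def using vdef hk by (simp add: lin_diff)
    hence "(\<Sum>i<M. v k i * x i) - d k = (a \<alpha>1 - int (bb j1 \<alpha>1) + int t + int (u j1)) - (a \<alpha>2 - int (bb j1 \<alpha>2) + int t + int (u j1))"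
      unfolding d_def hk by simp
    moreover have "int W dvd (a \<alpha>1 - int (bb j1 \<alpha>1) + int t + int (u j1))" using cong_bb mem by blast
    moreover have "int W dvd (a \<alpha>2 - int (bb j1 \<alpha>2) + int t + int (u j1))" using cong_bb mem jj by blast
    ultimately show "int W dvd ((\<Sum>i<M. v k i * x i) - d k)" by (metis dvd_diff)
  qed
  obtain e' where e': "\<forall>k\<in>Ss. (\<Sum>i<M. v k i * e' i) = d k" "\<forall>i<M. L0 dvd (e' i - x i)"
    using LAS[unfolded LAprop_def, rule_format, OF h1 h2 h3 h4[rule_format] h5[rule_format]] by blast
  have "eval_Tpow M (f j) e' = 0" if j: "j < J" for j
  proof -
    let ?A = "{\<alpha>. f j \<alpha> \<noteq> 0}"
    define g where "g \<alpha> = lin M \<alpha> e' - int (bb j \<alpha>)" for \<alpha>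
    have "eval_Tpow M (f j) e' = (\<Sum>\<alpha>\<in>?A. rf_of_poly (f j \<alpha>) * Tpow (lin M \<alpha> e'))" by (rule eval_alt)
    also have "\<dots> = (\<Sum>\<alpha>\<in>?A. rf_of_poly (f j \<alpha> * [:0, 1:] ^ bb j \<alpha>) * Tpow (g \<alpha>))"
    proof (intro sum.cong refl)
      fix \<alpha>
      have "Tpow (lin M \<alpha> e') = (Tpow (int (bb j \<alpha>)) * Tpow (g \<alpha>) :: 'a ratfun)"
        unfolding g_def by (simp add: Tpow_add[symmetric])
      thus "rf_of_poly (f j \<alpha>) * Tpow (lin M \<alpha> e') = rf_of_poly (f j \<alpha> * [:0, 1:] ^ bb j \<alpha>) * Tpow (g \<alpha>)"
        by (simp add: rf_mult Tpow_nat mult.assoc)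
    qed
    also have "\<dots> = 0"
    proof (rule cluster[where D=D])
      show "finite ?A" using fin j by simp
      show "\<forall>\<alpha>\<in>?A. \<forall>i. coeff (f j \<alpha> * [:0, 1:] ^ bb j \<alpha>) i \<noteq> 0 \<longrightarrow> bb j \<alpha> \<le> i \<and> i < bb j \<alpha> + D"
      proof (intro ballI allI impI)
        fix \<alpha> i assume \<alpha>: "\<alpha> \<in> ?A" and c: "coeff (f j \<alpha> * [:0, 1:] ^ bb j \<alpha>) i \<noteq> 0"
        hence le: "bb j \<alpha> \<le> i" and c2: "coeff (f j \<alpha>) (i - bb j \<alpha>) \<noteq> 0"
          by (auto simp: coeff_mult_X_pow split: if_splits)
        have "i - bb j \<alpha> \<le> degree (f j \<alpha>)" using c2 by (rule le_degree)
        moreover have "degree (f j \<alpha>) < D" using Ddef j \<alpha> by simp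
        ultimately show "bb j \<alpha> \<le> i \<and> i < bb j \<alpha> + D" using le by linarith
      qed
      show "(\<Sum>\<alpha>\<in>?A. f j \<alpha> * [:0, 1:] ^ bb j \<alpha>) = 0" using u j unfolding bb_def by simp
      show "\<forall>\<alpha>\<in>?A. \<forall>\<alpha>'\<in>?A. {min (bb j \<alpha>) (bb j \<alpha>')..max (bb j \<alpha>) (bb j \<alpha>')} \<subseteq> (\<Union>k\<in>?A. {bb j k..<bb j k + D}) \<longrightarrow> g \<alpha> = g \<alpha>'"
      proof (intro ballI impI)
        fix \<alpha> \<alpha>' assume \<alpha>: "\<alpha> \<in> ?A" "\<alpha>' \<in> ?A"
          and sub: "{min (bb j \<alpha>) (bb j \<alpha>')..max (bb j \<alpha>) (bb j \<alpha>')} \<subseteq> (\<Union>k\<in>?A. {bb j k..<bb j k + D})"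
        have "((j, \<alpha>), (j, \<alpha>')) \<in> Ix J f \<times> Ix J f" using \<alpha> j by (simp add: Ix_def)
        then obtain k where k: "k < r" "h k = ((j, \<alpha>), (j, \<alpha>'))"
          using enum unfolding bij_betw_def by (metis imageE lessThan_iff)
        have "rel (h k)" unfolding rel_def k(2) I_def using sub by simp
        hence "k \<in> Ss" unfolding Ss_def using k(1) by simp
        hence "(\<Sum>i<M. v k i * e' i) = d k" using e'(1) by blast
        hence "lin M \<alpha> e' - lin M \<alpha>' e' = int (bb j \<alpha>) - int (bb j \<alpha>')"
          unfolding d_def k(2) using vdef k(2) by (simp add: lin_diff)
        thus "g \<alpha> = g \<alpha>'" unfolding g_def by simp
      qed
    qed
    finally show ?thesis .
  qed
  thus ?thesis using e'(2) by blast
qed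


lemma rf_dvd_Tpow_diff:
  assumes "\<not> [:0, 1:] dvd (Q :: 'a::{field,finite} poly)" "Q dvd [:0, 1:] ^ d - 1" "d > 0"
    "int d dvd (b - a)"
  shows "rf_dvd Q (Tpow a - Tpow b)"
proof -
  define t where "t = nat \<bar>a\<bar> + nat \<bar>b\<bar>"
  have ta: "a + int t \<ge> 0" and tb: "b + int t \<ge> 0" unfolding t_def by linarith+
  have "(Tpow a - Tpow b) * rf_of_poly ([:0, 1::'a:] ^ t) =
        Tpow a * rf_of_poly ([:0, 1::'a:] ^ t) - Tpow b * rf_of_poly ([:0, 1::'a:] ^ t)"
    by (simp add: algebra_simps)
  also have "\<dots> = rf_of_poly ([:0, 1::'a:] ^ nat (a + int t) - [:0, 1:] ^ nat (b + int t))"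
    using Tpow_shift[where 'a='a, OF ta] Tpow_shift[where 'a='a, OF tb] by (simp add: rf_diff)
  finally have eq: "(Tpow a - Tpow b) * rf_of_poly ([:0, 1::'a:] ^ t) =
     rf_of_poly ([:0, 1::'a:] ^ nat (a + int t) - [:0, 1:] ^ nat (b + int t))" .
  have cop: "coprime ([:0, 1::'a:] ^ t) Q" by (rule coprime_power_left_poly[OF X_coprime[OF assms(1)]])
  have "int d dvd (a + int t) - (b + int t)" using assms(4) by (metis dvd_minus_iff minus_diff_eq diff_add_cancel add_diff_cancel_right)
  hence dv: "Q dvd [:0, 1::'a:] ^ nat (a + int t) - [:0, 1:] ^ nat (b + int t)"
    using dvd_X_pow_diff[OF assms(2) assms(3)] ta tb by blast
  show ?thesis by (rule rf_dvd_intro[OF _ cop dv eq]) simp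
qed


lemma key_lemma:
  fixes S :: "'a::{field,finite} poly set"
    and J M :: nat
    and f :: "nat \<Rightarrow> (nat \<Rightarrow> nat) \<Rightarrow> 'a poly"
    and e :: "nat \<Rightarrow> nat \<Rightarrow> int"
  assumes "finite S"
    and "\<forall>\<pi>\<in>S. irreducible \<pi>"
    and "\<forall>j<J. is_mpoly M (f j)"
    and "\<forall>Q. Q \<noteq> 0 \<and> (\<forall>\<pi>\<in>S. \<not> \<pi> dvd Q) \<longrightarrow>
           (\<exists>NQ. \<forall>n\<ge>NQ. \<forall>j<J. rf_dvd Q (eval_Tpow M (f j) (e n)))"
  shows "\<forall>L0>0. \<exists>n0. \<forall>n\<ge>n0. \<exists>e'. (\<forall>j<J. eval_Tpow M (f j) e' = 0) \<and> (\<forall>i<M. L0 dvd (e' i - e n i))"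
proof (intro allI impI)
  fix L0 :: int assume L0: "L0 > 0"
  have fin: "\<forall>j<J. finite {\<alpha>. f j \<alpha> \<noteq> 0}" using assms(3) unfolding is_mpoly_def by blast
  have finI: "finite (Ix J f)" by (rule finite_Ix[OF fin])
  define r where "r = card (Ix J f \<times> Ix J f)"
  obtain h where h: "bij_betw h {0..<card (Ix J f \<times> Ix J f)} (Ix J f \<times> Ix J f)"
    using ex_bij_betw_nat_finite[OF finite_cartesian_product[OF finI finI]] by (rule exE)
  have enum: "bij_betw h {..<r} (Ix J f \<times> Ix J f)" using h by (simp add: atLeast0LessThan r_def)
  define v where "v k i = int (snd (fst (h k)) i) - int (snd (snd (h k)) i)" for k i
  obtain c where c: "c > 0 \<and> (\<exists>B. \<forall>Ss. Ss \<subseteq> {..<r} \<longrightarrow> LAprop v Ss M c B)"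
    using LA_family[of r v M] by (rule exE)
  then obtain B where LA: "\<forall>Ss. Ss \<subseteq> {..<r} \<longrightarrow> LAprop v Ss M c B" by (elim conjE exE)
  define D where "D = 1 + (\<Sum>p\<in>Ix J f. degree (f (fst p) (snd p)))"
  have Ddef: "\<forall>j<J. \<forall>\<alpha>. f j \<alpha> \<noteq> 0 \<longrightarrow> degree (f j \<alpha>) < D"
  proof (intro allI impI)
    fix j \<alpha> assume "j < J" "f j \<alpha> \<noteq> 0"
    hence "(j, \<alpha>) \<in> Ix J f" by (simp add: Ix_def)
    hence "degree (f j \<alpha>) \<le> (\<Sum>p\<in>Ix J f. degree (f (fst p) (snd p)))"
      using finI by (metis (no_types, lifting) fst_conv member_le_sum snd_conv zero_le)
    thus "degree (f j \<alpha>) < D" unfolding D_def by simp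
  qed
  define nI where "nI = card (Ix J f)"
  define S' where "S' = {\<pi>\<in>S. coprime \<pi> [:0, 1:]}"
  have "\<forall>\<pi>\<in>S'. \<exists>o1. o1 > 0 \<and> \<pi> dvd [:0, 1:] ^ o1 - 1"
  proof
    fix \<pi> assume p: "\<pi> \<in> S'"
    hence "\<pi> \<noteq> 0" using assms(2) unfolding S'_def by (auto simp: irreducible_def)
    moreover have "coprime [:0, 1:] \<pi>" using p unfolding S'_def by (simp add: coprime_commute)
    ultimately show "\<exists>o1. o1 > 0 \<and> \<pi> dvd [:0, 1:] ^ o1 - 1" using order_exists by blast
  qed
  then obtain od where od: "\<forall>\<pi>\<in>S'. od \<pi> > 0 \<and> \<pi> dvd [:0, 1:] ^ od \<pi> - 1" by metis
  define Pr where "Pr = CHAR('a) * (\<Prod>\<pi>\<in>S'. od \<pi>)"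
  have finS': "finite S'" using assms(1) unfolding S'_def by simp
  have Pr0: "Pr > 0" unfolding Pr_def using od finS' finite_imp_CHAR_pos[where 'a='a] by (simp add: prod_pos)
  define N where "N = nat (c * L0)"
  have N0: "N > 0" and cL: "int N = c * L0" unfolding N_def using c L0 by simp_all
  define K0 where "K0 = nI * (D + 1) + nat (\<bar>B\<bar> * (int nI * int D + 1)) + 1"
  define l where "l = 1 + K0 * Pr"
  have lK: "l > K0" unfolding l_def using Pr0 by (simp add: less_Suc_eq_le)
  have l1: "l > nI * (D + 1)" using lK unfolding K0_def by simp
  have l2: "int l > B * (int nI * int D + 1)"
  proof -
    have nn: "int nI * int D + 1 \<ge> 0" by (simp only: of_nat_mult[symmetric])
    have "B * (int nI * int D + 1) \<le> \<bar>B\<bar> * (int nI * int D + 1)" by (rule mult_right_mono[OF abs_ge_self nn])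
    also have "\<dots> < int K0"
    proof -
      have q0: "\<bar>B\<bar> * (int nI * int D + 1) \<ge> 0" using nn by simp
      have "int K0 = int (nI * (D + 1)) + int (nat (\<bar>B\<bar> * (int nI * int D + 1))) + 1"
        unfolding K0_def by (simp only: of_nat_add of_nat_1)
      also have "int (nat (\<bar>B\<bar> * (int nI * int D + 1))) = \<bar>B\<bar> * (int nI * int D + 1)" using q0 by simp
      finally show ?thesis by linarith
    qed
    also have "\<dots> < int l" using lK by simp
    finally show ?thesis .
  qed
  have l0: "l > 0" unfolding l_def by simp
  define Q where "Q = (Qp N l :: 'a poly)"
  have Qnz: "Q \<noteq> 0" unfolding Q_def by (rule Qp_nz[OF l0 N0])
  have Qgood: "\<forall>\<pi>\<in>S. \<not> \<pi> dvd Q"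
  proof
    fix \<pi> assume p: "\<pi> \<in> S"
    show "\<not> \<pi> dvd Q" unfolding Q_def
    proof (rule Qp_good[OF _ N0 l0])
      show "irreducible \<pi>" using assms(2) p by blast
      show "CHAR('a) dvd (l - 1)" unfolding l_def Pr_def by simp
      assume cp: "coprime \<pi> [:0, 1:]"
      hence pS': "\<pi> \<in> S'" using p unfolding S'_def by simp
      have "od \<pi> dvd Pr" unfolding Pr_def using pS' finS' by (simp add: dvd_prodI)
      hence "od \<pi> dvd l - 1" unfolding l_def by simp
      thus "\<pi> dvd [:0, 1:] ^ od \<pi> - 1 \<and> od \<pi> > 0 \<and> od \<pi> dvd (l - 1)" using od pS' by blast
    qed
  qed
  obtain NQ where NQ: "\<forall>n\<ge>NQ. \<forall>j<J. rf_dvd Q (eval_Tpow M (f j) (e n))"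
    using assms(4)[rule_format, OF conjI[OF Qnz Qgood]] by (rule exE)
  show "\<exists>n0. \<forall>n\<ge>n0. \<exists>e'. (\<forall>j<J. eval_Tpow M (f j) e' = 0) \<and> (\<forall>i<M. L0 dvd (e' i - e n i))"
  proof (rule exI[of _ NQ], intro allI impI)
    fix n assume "NQ \<le> n"
    hence dv: "\<forall>j<J. rf_dvd (Qp N l) (eval_Tpow M (f j) (e n))" using NQ unfolding Q_def by blast
    show "\<exists>e'. (\<forall>j<J. eval_Tpow M (f j) e' = 0) \<and> (\<forall>i<M. L0 dvd (e' i - e n i))"
      by (rule exact_solution[OF fin enum _ LA Ddef _ N0 refl cL l1 l2 dv])
         (simp_all add: v_def nI_def)
  qed
qed


theorem proposition7:
  fixes S :: "'a::{field,finite} poly set"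
    and J M :: nat
    and f :: "nat \<Rightarrow> (nat \<Rightarrow> nat) \<Rightarrow> 'a poly"
    and e :: "nat \<Rightarrow> nat \<Rightarrow> int"
  assumes "finite S"
    and "\<forall>\<pi>\<in>S. irreducible \<pi>"
    and "\<forall>j<J. is_mpoly M (f j)"
    and "\<forall>Q. Q \<noteq> 0 \<and> (\<forall>\<pi>\<in>S. \<not> \<pi> dvd Q) \<longrightarrow>
           (\<exists>NQ. \<forall>n\<ge>NQ. \<forall>j<J. rf_dvd Q (eval_Tpow M (f j) (e n)))"
  shows "\<exists>\<N> :: nat set. \<exists>e' :: nat \<Rightarrow> nat \<Rightarrow> int. infinite \<N> \<and>
           (\<forall>n\<in>\<N>. \<forall>j<J. eval_Tpow M (f j) (e' n) = 0) \<and>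
           (\<forall>Q :: 'a poly. \<not> [:0, 1:] dvd Q \<longrightarrow>
              (\<exists>NQ. \<forall>n\<in>\<N>. n \<ge> NQ \<longrightarrow>
                 (\<forall>i<M. rf_dvd Q (Tpow (e n i) - Tpow (e' n i)))))"
proof -
  have K: "\<forall>L0>0. \<exists>n0. \<forall>n\<ge>n0. \<exists>e'. (\<forall>j<J. eval_Tpow M (f j) e' = 0) \<and> (\<forall>i<M. L0 dvd (e' i - e n i))"
    by (rule key_lemma[OF assms])
  have "\<forall>m. \<exists>n0. \<forall>n\<ge>n0. \<exists>e'. (\<forall>j<J. eval_Tpow M (f j) e' = 0) \<and> (\<forall>i<M. int (fact m) dvd (e' i - e n i))"
    using K by (simp add: fact_gt_zero)
  then obtain n0 where n0: "\<forall>m. \<forall>n\<ge>n0 m. \<exists>e'. (\<forall>j<J. eval_Tpow M (f j) e' = 0) \<and> (\<forall>i<M. int (fact m) dvd (e' i - e n i))"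
    by (rule choice[elim_format]) blast
  define Nset where "Nset = {n. n \<ge> n0 1 \<and> n \<ge> 1}"
  define mm where "mm n = Max {m. m \<le> n \<and> n0 m \<le> n}" for n
  have mm: "mm n \<le> n \<and> n0 (mm n) \<le> n" and mmge: "\<And>m. m \<le> n \<Longrightarrow> n0 m \<le> n \<Longrightarrow> m \<le> mm n"
    if "n \<in> Nset" for n
  proof -
    have fin: "finite {m. m \<le> n \<and> n0 m \<le> n}" by simp
    have ne: "1 \<in> {m. m \<le> n \<and> n0 m \<le> n}" using that unfolding Nset_def by simp
    show "mm n \<le> n \<and> n0 (mm n) \<le> n" unfolding mm_def using Max_in[OF fin] ne by blast
    show "\<And>m. m \<le> n \<Longrightarrow> n0 m \<le> n \<Longrightarrow> m \<le> mm n" unfolding mm_def using Max_ge[OF fin] by blast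
  qed
  define e'' where "e'' n = (SOME e'. (\<forall>j<J. eval_Tpow M (f j) e' = 0) \<and> (\<forall>i<M. int (fact (mm n)) dvd (e' i - e n i)))" for n
  have e'': "(\<forall>j<J. eval_Tpow M (f j) (e'' n) = 0) \<and> (\<forall>i<M. int (fact (mm n)) dvd (e'' n i - e n i))"
    if "n \<in> Nset" for n
  proof -
    have "\<exists>e'. (\<forall>j<J. eval_Tpow M (f j) e' = 0) \<and> (\<forall>i<M. int (fact (mm n)) dvd (e' i - e n i))"
      using n0 mm[OF that] by blast
    thus ?thesis unfolding e''_def by (rule someI_ex)
  qed
  have inf: "infinite Nset"
    unfolding infinite_nat_iff_unbounded_le
  proof
    fix m
    show "\<exists>n\<ge>m. n \<in> Nset"
      by (rule exI[of _ "max m (max (n0 1) 1)"]) (simp add: Nset_def le_max_iff_disj)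
  qed
  have conc2: "\<exists>NQ. \<forall>n\<in>Nset. n \<ge> NQ \<longrightarrow> (\<forall>i<M. rf_dvd Q (Tpow (e n i) - Tpow (e'' n i)))"
    if Q: "\<not> [:0, 1:] dvd Q" for Q :: "'a poly"
  proof -
    have Qnz: "Q \<noteq> 0" using Q by auto
    obtain d where d: "d > 0" "Q dvd [:0, 1:] ^ d - 1"
      using order_exists[OF Qnz X_coprime[OF Q]] by blast
    show ?thesis
    proof (rule exI[of _ "max d (n0 d)"], intro ballI impI allI)
      fix n i assume n: "n \<in> Nset" "max d (n0 d) \<le> n" and i: "i < M"
      have "d \<le> mm n" using mmge[OF n(1)] n(2) by simp
      hence "d dvd fact (mm n)" using d(1) by (simp add: dvd_fact)
      hence "int d dvd int (fact (mm n))" by (simp only: int_dvd_int_iff)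
      moreover have "int (fact (mm n)) dvd (e'' n i - e n i)" using e''[OF n(1)] i by blast
      ultimately have "int d dvd (e'' n i - e n i)" by (rule dvd_trans)
      thus "rf_dvd Q (Tpow (e n i) - Tpow (e'' n i))" by (rule rf_dvd_Tpow_diff[OF Q d(2) d(1)])
    qed
  qed
  show ?thesis
    by (rule exI[of _ Nset], rule exI[of _ e'']) (use inf e'' conc2 in blast)
qed


end
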